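(* Let $d\ge m\ge 1$ be integers. Let $a^+_{m}(n;d)$ (resp. $a^-_{m}(n;d)$) denote the number of partitions of $n$ whose Frobenius symbol has exactly $d$ columns and exactly $m$ parity blocks, the last parity block being positive (resp. negative). Then, as formal power series in $q$, \[ \sum_{n=1}^{\infty} a^+_{m}(n;d) q^n = \frac{q^{d^2+d+\binom{m}{2}}}{(q;q)_{2d}}\, \frac{1-q^m}{1-q^d} \begin{bmatrix}2d\\ d+m\end{bmatrix}_q \] and \[ \sum_{n=1}^{\infty} a^-_{m}(n;d) q^n = \frac{q^{d^2+\binom{m}{2}}}{(q;q)_{2d}}\, \frac{1-q^m}{1-q^d} \begin{bmatrix}2d\\ d+m\end{bmatrix}_q . \]
   Context: Every partition $\lambda$ of $n$ is represented by its Frobenius symbol $\begin{pmatrix} x_1 & \cdots & x_d\\ y_1&\cdots & y_d\end{pmatrix}$, where $d$ is the number of cells on the main diagonal of the Ferrers diagram, $x_i$ (resp. $y_i$) is the number of cells in row $i$ to the right of (resp. in column $i$ below) the diagonal, so $x_1>\cdots>x_d\ge 0$, $y_1>\cdots>y_d\ge0$ and $\sum_{i=1}^d(x_i+y_i+1)=n$; $d$ is called the number of columns. Column $i$ is positive if $x_i-y_i\ge 1$ and negative if $x_i-y_i\le 0$. The parity blocks of $\lambda$ are the maximal sets of contiguous columns all having the same sign; a block is positive (resp. negative) if its columns are positive (resp. negative). Notation: $(a;q)_n=(1-a)(1-aq)\cdots(1-aq^{n-1})$, and $\begin{bmatrix}n\\k\end{bmatrix}_q=\frac{(q;q)_n}{(q;q)_k(q;q)_{n-k}}$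 for $n\ge k\ge0$ and $0$ otherwise. *)

theory Defs
  imports "HOL-Computational_Algebra.Formal_Power_Series"
begin

definition partitions :: "nat \<Rightarrow> nat list set" where
  "partitions n = {l. sorted_wrt (\<ge>) l \<and> (\<forall>x\<in>set l. 0 < x) \<and> sum_list l = n}"

text \<open>Number of columns d of the Frobenius symbol = number of diagonal cells
  (0-indexed: cell (i,i) exists iff row i has more than i cells).\<close>
definition frob_d :: "nat list \<Rightarrow> nat" where
  "frob_d l = card {i. i < length l \<and> i < l ! i}"

definition conj_part :: "nat list \<Rightarrow> nat \<Rightarrow> nat" where
  "conj_part l i = card {j. j < length l \<and> i < l ! j}"

text \<open>x_i: cells in row i right of the diagonal; y_i: cells in column i below it
  (columns indexed 0..d-1 here, i.e. index i here is column i+1 of the paper).\<close>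
definition frob_x :: "nat list \<Rightarrow> nat \<Rightarrow> nat" where
  "frob_x l i = l ! i - i - 1"

definition frob_y :: "nat list \<Rightarrow> nat \<Rightarrow> nat" where
  "frob_y l i = conj_part l i - i - 1"

definition col_positive :: "nat list \<Rightarrow> nat \<Rightarrow> bool" where
  "col_positive l i \<longleftrightarrow> int (frob_x l i) - int (frob_y l i) \<ge> 1"

definition col_signs :: "nat list \<Rightarrow> bool list" where
  "col_signs l = map (col_positive l) [0..<frob_d l]"

definition num_blocks :: "nat list \<Rightarrow> nat" where
  "num_blocks l = length (remdups_adj (col_signs l))"

definition last_block_positive :: "nat list \<Rightarrow> bool" where
  "last_block_positive l \<longleftrightarrow> last (col_signs l)"

definition a_plus :: "nat \<Rightarrow> nat \<Rightarrow> nat \<Rightarrow> nat" where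
  "a_plus m n d = card {l \<in> partitions n. frob_d l = d \<and> num_blocks l = m \<and> last_block_positive l}"

definition a_minus :: "nat \<Rightarrow> nat \<Rightarrow> nat \<Rightarrow> nat" where
  "a_minus m n d = card {l \<in> partitions n. frob_d l = d \<and> num_blocks l = m \<and> \<not> last_block_positive l}"

definition qpoch :: "'a::comm_ring_1 fps \<Rightarrow> nat \<Rightarrow> 'a fps" where
  "qpoch a n = (\<Prod>k<n. 1 - a * fps_X ^ k)"

definition qbinom :: "nat \<Rightarrow> nat \<Rightarrow> 'a::field fps" where
  "qbinom n k = (if k \<le> n then qpoch fps_X n / (qpoch fps_X k * qpoch fps_X (n - k)) else 0)"

end

theory Submission
  imports Defs
begin

lemma down_closed:
  assumes fin: "finite S" and dc: "\<And>i j. i \<in> S \<Longrightarrow> j < i \<Longrightarrow> j \<in> S"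
  shows "S = {..<card S}"
proof -
  have ex: "\<exists>k. k \<notin> S" using fin by (meson ex_new_if_finite infinite_UNIV_nat)
  define k where "k = (LEAST k. k \<notin> S)"
  have kS: "k \<notin> S" unfolding k_def using ex by (rule LeastI_ex)
  have lt: "i \<in> S" if "i < k" for i using that not_less_Least unfolding k_def by blast
  have "S = {..<k}"
  proof
    show "S \<subseteq> {..<k}"
    proof
      fix i assume "i \<in> S"
      show "i \<in> {..<k}"
      proof (rule ccontr)
        assume "i \<notin> {..<k}"
        then have "k \<le> i" by simp
        then have "k = i \<or> k < i" by auto
        then show False using \<open>i \<in> S\<close> kS dc[of i k] by auto
      qed
    qed
  next
    show "{..<k} \<subseteq> S" using lt by auto
  qed
  then show ?thesis by simp
qed

context
  fixes l :: "nat list"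
  assumes srt: "sorted_wrt (\<ge>) l" and posl: "\<forall>x\<in>set l. 0 < x"
begin

lemma mono_l: "i \<le> j \<Longrightarrow> j < length l \<Longrightarrow> l ! j \<le> l ! i"
  using sorted_wrt_nth_less[OF srt, of i j] by (cases "i = j") auto

lemma pos_nth: "i < length l \<Longrightarrow> 0 < l ! i"
  using posl nth_mem by blast

lemma S_dc: "{i. i < length l \<and> i < l ! i} = {..<frob_d l}"
proof -
  have "{i. i < length l \<and> i < l ! i} = {..<card {i. i < length l \<and> i < l ! i}}"
  proof (rule down_closed)
    show "finite {i. i < length l \<and> i < l ! i}" by simp
  next
    fix i j assume "i \<in> {i. i < length l \<and> i < l ! i}" "j < i"
    then show "j \<in> {i. i < length l \<and> i < l ! i}" using mono_l[of j i] by auto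
  qed
  then show ?thesis by (simp add: frob_d_def)
qed

lemma d_iff: "i < frob_d l \<longleftrightarrow> i < length l \<and> i < l ! i"
  using S_dc by blast

lemma d_le_len: "frob_d l \<le> length l"
  using d_iff[of "frob_d l - 1"] by (cases "frob_d l") auto

lemma C_dc: "{i. i < length l \<and> j < l ! i} = {..<conj_part l j}"
proof -
  have "{i. i < length l \<and> j < l ! i} = {..<card {i. i < length l \<and> j < l ! i}}"
  proof (rule down_closed)
    show "finite {i. i < length l \<and> j < l ! i}" by simp
  next
    fix i i' assume "i \<in> {i. i < length l \<and> j < l ! i}" "i' < i"
    then show "i' \<in> {i. i < length l \<and> j < l ! i}" using mono_l[of i' i] by auto
  qed
  then show ?thesis by (simp add: conj_part_def)
qed

lemma c_iff: "i < conj_part l j \<longleftrightarrow> i < length l \<and> j < l ! i"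
  using C_dc by blast

lemma nth_ge_d: "i < frob_d l \<Longrightarrow> frob_d l \<le> l ! i"
proof -
  assume i: "i < frob_d l"
  let ?d = "frob_d l"
  have "?d - 1 < ?d" using i by simp
  then have a: "?d - 1 < length l" "?d - 1 < l ! (?d - 1)" using d_iff by blast+
  have "l ! (?d - 1) \<le> l ! i" using mono_l[of i "?d - 1"] i a by simp
  then show ?thesis using a by simp
qed

lemma nth_le_d: "frob_d l \<le> i \<Longrightarrow> i < length l \<Longrightarrow> l ! i \<le> frob_d l"
proof -
  assume i: "frob_d l \<le> i" "i < length l"
  let ?d = "frob_d l"
  have dl: "?d < length l" using i by simp
  have "\<not> ?d < l ! ?d" using d_iff[of ?d] dl by simp
  moreover have "l ! i \<le> l ! ?d" using mono_l i by simp
  ultimately show ?thesis by simp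
qed

lemma x_strict: "i < j \<Longrightarrow> j < frob_d l \<Longrightarrow> frob_x l j < frob_x l i"
proof -
  assume ij: "i < j" "j < frob_d l"
  have "j < length l" "j < l ! j" using d_iff ij(2) by auto
  moreover have "l ! j \<le> l ! i" using mono_l[of i j] ij \<open>j < length l\<close> by simp
  ultimately show ?thesis unfolding frob_x_def using ij by linarith
qed

lemma c_gt: "j < frob_d l \<Longrightarrow> j < conj_part l j"
  using d_iff c_iff by blast

lemma c_mono: "i \<le> j \<Longrightarrow> conj_part l j \<le> conj_part l i"
proof -
  assume "i \<le> j"
  then have "{k. k < length l \<and> j < l ! k} \<subseteq> {k. k < length l \<and> i < l ! k}" by auto
  then show ?thesis unfolding conj_part_def by (intro card_mono) auto
qed

lemma y_strict: "i < j \<Longrightarrow> j < frob_d l \<Longrightarrow> frob_y l j < frob_y l i"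
proof -
  assume ij: "i < j" "j < frob_d l"
  have "j < conj_part l j" using c_gt ij(2) .
  moreover have "conj_part l j \<le> conj_part l i" using c_mono ij by simp
  ultimately show ?thesis unfolding frob_y_def using ij by linarith
qed

lemma conj_sum: "(\<Sum>j<k. conj_part l j) = (\<Sum>i<length l. min k (l ! i))"
proof (induction k)
  case 0 then show ?case by simp
next
  case (Suc k)
  have "conj_part l k = (\<Sum>i<length l. if k < l ! i then 1 else 0)"
  proof -
    have "conj_part l k = card {i \<in> {..<length l}. k < l ! i}" unfolding conj_part_def
      by (rule arg_cong[where f=card]) auto
    also have "\<dots> = (\<Sum>i\<in>{i \<in> {..<length l}. k < l ! i}. 1)" by simp
    also have "\<dots> = (\<Sum>i<length l. if k < l ! i then 1 else 0)"
      by (rule sum.inter_filter) simp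
    finally show ?thesis .
  qed
  moreover have "(\<Sum>i<length l. min (Suc k) (l ! i)) = (\<Sum>i<length l. min k (l ! i)) + (\<Sum>i<length l. if k < l ! i then 1 else 0)"
    by (simp add: sum.distrib[symmetric]) (rule sum.cong, auto)
  ultimately show ?case using Suc by simp
qed

lemma two_tri: "2 * (\<Sum>i<d. Suc i) = d * Suc d"
  by (induction d) auto

lemma weight:
  "(\<Sum>i<frob_d l. frob_x l i) + (\<Sum>i<frob_d l. frob_y l i) + frob_d l = sum_list l"
proof -
  let ?d = "frob_d l" and ?L = "length l"
  have dL: "?d \<le> ?L" by (rule d_le_len)
  let ?A = "\<Sum>i<?d. l ! i" and ?Z = "\<Sum>i\<in>{?d..<?L}. l ! i" and ?T = "\<Sum>i<?d. Suc i"
  have sl: "sum_list l = ?A + ?Z"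
  proof -
    have "sum_list l = (\<Sum>i<?L. l ! i)" by (simp add: sum_list_sum_nth atLeast0LessThan)
    also have "\<dots> = (\<Sum>i\<in>{..<?d} \<union> {?d..<?L}. l ! i)"
      using dL by (intro sum.cong) auto
    also have "\<dots> = ?A + ?Z" by (rule sum.union_disjoint) auto
    finally show ?thesis .
  qed
  have cs: "(\<Sum>j<?d. conj_part l j) = ?d * ?d + ?Z"
  proof -
    have "(\<Sum>j<?d. conj_part l j) = (\<Sum>i<?L. min ?d (l ! i))" by (rule conj_sum)
    also have "\<dots> = (\<Sum>i\<in>{..<?d} \<union> {?d..<?L}. min ?d (l ! i))"
      using dL by (intro sum.cong) auto
    also have "\<dots> = (\<Sum>i<?d. min ?d (l ! i)) + (\<Sum>i\<in>{?d..<?L}. min ?d (l ! i))"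
      by (rule sum.union_disjoint) auto
    also have "(\<Sum>i<?d. min ?d (l ! i)) = (\<Sum>i<?d. ?d)"
      using nth_ge_d by (intro sum.cong) auto
    also have "(\<Sum>i\<in>{?d..<?L}. min ?d (l ! i)) = ?Z"
      using nth_le_d by (intro sum.cong) auto
    finally show ?thesis by simp
  qed
  have sx: "(\<Sum>i<?d. frob_x l i) = ?A - ?T"
  proof -
    have "(\<Sum>i<?d. frob_x l i) = (\<Sum>i<?d. l ! i - Suc i)" unfolding frob_x_def by simp
    also have "\<dots> = ?A - ?T"
      by (rule sum_subtractf_nat) (use d_iff in auto)
    finally show ?thesis .
  qed
  have sy: "(\<Sum>i<?d. frob_y l i) = (\<Sum>j<?d. conj_part l j) - ?T"
  proof -
    have "(\<Sum>i<?d. frob_y l i) = (\<Sum>i<?d. conj_part l i - Suc i)" unfolding frob_y_def by simp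
    also have "\<dots> = (\<Sum>j<?d. conj_part l j) - ?T"
      by (rule sum_subtractf_nat) (simp add: Suc_le_eq c_gt)
    finally show ?thesis .
  qed
  have TA: "?T \<le> ?A" by (rule sum_mono) (use d_iff in auto)
  have TC: "?T \<le> (\<Sum>j<?d. conj_part l j)" by (rule sum_mono) (simp add: Suc_le_eq c_gt)
  have tt: "2 * ?T = ?d * Suc ?d" by (rule two_tri)
  show ?thesis using sl cs sx sy TA TC tt by (simp add: algebra_simps)
qed

end


lemma dec_gap: "(\<And>i j. i < j \<Longrightarrow> j < length L \<Longrightarrow> L ! j < L ! i) \<Longrightarrow> i \<le> j \<Longrightarrow> j < length L \<Longrightarrow> L ! j + (j - i) \<le> (L ! i :: nat)"
proof (induction j)
  case 0 then show ?case by simp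
next
  case (Suc j)
  show ?case
  proof (cases "i = Suc j")
    case True then show ?thesis by simp
  next
    case False
    then have "i \<le> j" using Suc.prems by simp
    then have "L ! j + (j - i) \<le> L ! i" using Suc by simp
    moreover have "L ! Suc j < L ! j" using Suc.prems by simp
    ultimately show ?thesis using \<open>i \<le> j\<close> by linarith
  qed
qed

lemma rev_dec: "sorted_wrt (<) xs \<Longrightarrow> i < j \<Longrightarrow> j < length xs \<Longrightarrow> rev xs ! j < (rev xs ! i :: nat)"
  by (simp add: rev_nth sorted_wrt_nth_less)

definition FF :: "nat \<Rightarrow> nat list \<Rightarrow> nat list \<times> nat list" where
  "FF d l = (rev (map (frob_x l) [0..<d]), rev (map (frob_y l) [0..<d]))"

definition GG :: "nat \<Rightarrow> nat list \<times> nat list \<Rightarrow> nat list" where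
  "GG d p = map (\<lambda>i. if i < d then rev (fst p) ! i + i + 1 else card {j. j < d \<and> i \<le> rev (snd p) ! j + j}) [0..<Suc (rev (snd p) ! 0)]"

definition AA :: "nat \<Rightarrow> nat \<Rightarrow> nat list set" where
  "AA n d = {l \<in> partitions n. frob_d l = d}"

definition BB :: "nat \<Rightarrow> nat \<Rightarrow> (nat list \<times> nat list) set" where
  "BB n d = {p. sorted_wrt (<) (fst p) \<and> sorted_wrt (<) (snd p) \<and> length (fst p) = d \<and> length (snd p) = d
     \<and> sum_list (fst p) + sum_list (snd p) + d = n}"

lemma sum_rev_map: "sum_list (rev (map f [0..<d])) = (\<Sum>i<d. (f i :: nat))"
  by (simp add: sum_list_rev interv_sum_list_conv_sum_set_nat atLeast0LessThan)

lemma sorted_rev_map: assumes "\<And>i j. i < j \<Longrightarrow> j < d \<Longrightarrow> f j < (f i :: nat)" shows "sorted_wrt (<) (rev (map f [0..<d]))"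
  unfolding sorted_wrt_iff_nth_less
proof (intro allI impI)
  fix i j assume ij: "i < j" "j < length (rev (map f [0..<d]))"
  then have a: "d - Suc j < d - Suc i" "d - Suc i < d" by auto
  show "rev (map f [0..<d]) ! i < rev (map f [0..<d]) ! j"
    using assms[OF a] ij by (simp add: rev_nth)
qed

lemma sum_map_upt: "sum_list (map f [0..<d]) = (\<Sum>i<d. (f i :: nat))"
  by (simp add: interv_sum_list_conv_sum_set_nat atLeast0LessThan)

lemma FF_in: "l \<in> AA n d \<Longrightarrow> FF d l \<in> BB n d"
proof -
  assume "l \<in> AA n d"
  then have srt: "sorted_wrt (\<ge>) l" and posl: "\<forall>x\<in>set l. 0 < x" and sl: "sum_list l = n" and d: "frob_d l = d"
    by (auto simp: AA_def partitions_def)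
  have "sorted_wrt (<) (rev (map (frob_x l) [0..<d]))"
    by (rule sorted_rev_map) (use x_strict[OF srt posl] d in auto)
  moreover have "sorted_wrt (<) (rev (map (frob_y l) [0..<d]))"
    by (rule sorted_rev_map) (use y_strict[OF srt posl] d in auto)
  moreover have "(\<Sum>i<d. frob_x l i) + (\<Sum>i<d. frob_y l i) + d = n"
    using weight[OF srt posl] d sl by simp
  ultimately show ?thesis by (simp add: FF_def BB_def sum_rev_map sum_map_upt)
qed

lemma len_conj0: "\<forall>x\<in>set l. 0 < x \<Longrightarrow> conj_part l 0 = length l"
proof -
  assume "\<forall>x\<in>set l. 0 < x"
  then have "{j. j < length l \<and> 0 < l ! j} = {..<length l}" using nth_mem by auto
  then show ?thesis by (simp add: conj_part_def)
qed

lemma FF_inj: "1 \<le> d \<Longrightarrow> inj_on (FF d) (AA n d)"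
proof (rule inj_onI)
  fix l1 l2 assume d1: "1 \<le> d" and l1: "l1 \<in> AA n d" and l2: "l2 \<in> AA n d" and e: "FF d l1 = FF d l2"
  have s1: "sorted_wrt (\<ge>) l1" "\<forall>x\<in>set l1. 0 < x" "frob_d l1 = d" using l1 by (auto simp: AA_def partitions_def)
  have s2: "sorted_wrt (\<ge>) l2" "\<forall>x\<in>set l2. 0 < x" "frob_d l2 = d" using l2 by (auto simp: AA_def partitions_def)
  have ex: "map (frob_x l1) [0..<d] = map (frob_x l2) [0..<d]" and ey: "map (frob_y l1) [0..<d] = map (frob_y l2) [0..<d]"
    using e by (auto simp: FF_def)
  have fx: "frob_x l1 i = frob_x l2 i" if "i < d" for i using ex that map_eq_conv by fastforce
  have fy: "frob_y l1 i = frob_y l2 i" if "i < d" for i using ey that map_eq_conv by fastforce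
  have nx: "l ! i = frob_x l i + i + 1" if "sorted_wrt (\<ge>) l" "\<forall>x\<in>set l. 0 < x" "i < frob_d l" for l i
    using d_iff[OF that(1,2), of i] that(3) unfolding frob_x_def by simp
  have ny: "conj_part l j = frob_y l j + j + 1" if "sorted_wrt (\<ge>) l" "\<forall>x\<in>set l. 0 < x" "j < frob_d l" for l j
    using c_gt[OF that] unfolding frob_y_def by simp
  have cj: "conj_part l1 j = conj_part l2 j" if "j < d" for j
    using ny[OF s1(1,2), of j] ny[OF s2(1,2), of j] fy[OF that] that s1(3) s2(3) by simp
  have len: "length l1 = length l2"
    using cj[of 0] d1 len_conj0[OF s1(2)] len_conj0[OF s2(2)] by simp
  have big: "l ! i = card {j. j < d \<and> i < conj_part l j}"
    if "sorted_wrt (\<ge>) l" "\<forall>x\<in>set l. 0 < x" "frob_d l = d" "d \<le> i" "i < length l" for l i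
  proof -
    have "{j. j < d \<and> i < conj_part l j} = {j. j < d \<and> j < l ! i}"
      using c_iff[OF that(1,2)] that(5) by auto
    also have "\<dots> = {..<l ! i}" using nth_le_d[OF that(1,2), of i] that by auto
    finally show ?thesis by simp
  qed
  show "l1 = l2"
  proof (rule nth_equalityI)
    show "length l1 = length l2" by (rule len)
  next
    fix i assume i: "i < length l1"
    show "l1 ! i = l2 ! i"
    proof (cases "i < d")
      case True
      then show ?thesis using nx[OF s1(1,2), of i] nx[OF s2(1,2), of i] fx[OF True] s1(3) s2(3) by simp
    next
      case False
      have "{j. j < d \<and> i < conj_part l1 j} = {j. j < d \<and> i < conj_part l2 j}" using cj by auto
      then show ?thesis using big[OF s1, of i] big[OF s2, of i] i len False by simp
    qed
  qed
qed


context
  fixes xs ys :: "nat list" and d :: nat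
  assumes sx: "sorted_wrt (<) xs" and sy: "sorted_wrt (<) ys" and lx: "length xs = d" and ly: "length ys = d"
    and d1: "1 \<le> d"
begin

lemma xgap: "i \<le> j \<Longrightarrow> j < d \<Longrightarrow> rev xs ! j + (j - i) \<le> rev xs ! i"
  by (rule dec_gap) (use rev_dec[OF sx] lx in auto)

lemma ygap: "i \<le> j \<Longrightarrow> j < d \<Longrightarrow> rev ys ! j + (j - i) \<le> rev ys ! i"
  by (rule dec_gap) (use rev_dec[OF sy] ly in auto)

lemma xlow: "i < d \<Longrightarrow> d - 1 \<le> rev xs ! i + i"
proof -
  assume i: "i < d"
  have "rev xs ! (d - 1) + (d - 1 - i) \<le> rev xs ! i" using xgap[of i "d - 1"] i d1 by simp
  then show ?thesis by linarith
qed

lemma ylow: "i < d \<Longrightarrow> d - 1 \<le> rev ys ! i + i"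
proof -
  assume i: "i < d"
  have "rev ys ! (d - 1) + (d - 1 - i) \<le> rev ys ! i" using ygap[of i "d - 1"] i d1 by simp
  then show ?thesis by linarith
qed

lemma ymono: "j \<le> j' \<Longrightarrow> j' < d \<Longrightarrow> rev ys ! j' + j' \<le> rev ys ! j + j"
  using ygap[of j j'] by simp

lemma K_iff: "j < card {k. k < d \<and> i \<le> rev ys ! k + k} \<longleftrightarrow> j < d \<and> i \<le> rev ys ! j + j"
proof -
  have "{k. k < d \<and> i \<le> rev ys ! k + k} = {..<card {k. k < d \<and> i \<le> rev ys ! k + k}}"
  proof (rule down_closed)
    show "finite {k. k < d \<and> i \<le> rev ys ! k + k}" by simp
  next
    fix a b assume "a \<in> {k. k < d \<and> i \<le> rev ys ! k + k}" "b < a"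
    then show "b \<in> {k. k < d \<and> i \<le> rev ys ! k + k}" using ymono[of b a] by auto
  qed
  then show ?thesis by blast
qed

lemma K_le: "card {k. k < d \<and> i \<le> rev ys ! k + k} \<le> d"
proof -
  have "{k. k < d \<and> i \<le> rev ys ! k + k} \<subseteq> {..<d}" by auto
  then show ?thesis using card_mono[of "{..<d}"] by fastforce
qed

lemma lenG: "length (GG d (xs, ys)) = Suc (rev ys ! 0)"
  by (simp add: GG_def)

lemma d_le_lenG: "d \<le> length (GG d (xs, ys))"
  using ylow[of 0] d1 lenG by simp

lemma Gnth: "i < length (GG d (xs, ys)) \<Longrightarrow> GG d (xs, ys) ! i = (if i < d then rev xs ! i + i + 1 else card {j. j < d \<and> i \<le> rev ys ! j + j})"
  by (simp add: GG_def del: upt_Suc)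

lemma G_sorted: "sorted_wrt (\<ge>) (GG d (xs, ys))"
  unfolding sorted_wrt_iff_nth_less
proof (intro allI impI)
  fix i j assume ij: "i < j" "j < length (GG d (xs, ys))"
  then have il: "i < length (GG d (xs, ys))" by simp
  show "GG d (xs, ys) ! j \<le> GG d (xs, ys) ! i"
  proof (cases "j < d")
    case True
    then show ?thesis using Gnth[OF il] Gnth[OF ij(2)] xgap[of i j] ij by simp
  next
    case jd: False
    show ?thesis
    proof (cases "i < d")
      case True
      then show ?thesis using Gnth[OF il] Gnth[OF ij(2)] xlow[of i] K_le[of j] jd by simp
    next
      case False
      have "{k. k < d \<and> j \<le> rev ys ! k + k} \<subseteq> {k. k < d \<and> i \<le> rev ys ! k + k}" using ij by auto
      then have "card {k. k < d \<and> j \<le> rev ys ! k + k} \<le> card {k. k < d \<and> i \<le> rev ys ! k + k}"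
        by (intro card_mono) auto
      then show ?thesis using Gnth[OF il] Gnth[OF ij(2)] False jd by simp
    qed
  qed
qed

lemma G_pos: "\<forall>v\<in>set (GG d (xs, ys)). 0 < v"
proof
  fix v assume "v \<in> set (GG d (xs, ys))"
  then obtain i where i: "i < length (GG d (xs, ys))" and v: "v = GG d (xs, ys) ! i"
    by (auto simp: in_set_conv_nth)
  show "0 < v"
  proof (cases "i < d")
    case True then show ?thesis using Gnth[OF i] v by simp
  next
    case False
    have "i \<le> rev ys ! 0" using i lenG by simp
    then have "0 < card {k. k < d \<and> i \<le> rev ys ! k + k}" using K_iff[of 0 i] d1 by simp
    then show ?thesis using Gnth[OF i] v False by simp
  qed
qed

lemma G_d: "frob_d (GG d (xs, ys)) = d"
proof -
  have "{i. i < length (GG d (xs, ys)) \<and> i < GG d (xs, ys) ! i} = {..<d}"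
  proof (rule set_eqI, rule iffI)
    fix i assume "i \<in> {i. i < length (GG d (xs, ys)) \<and> i < GG d (xs, ys) ! i}"
    then have i: "i < length (GG d (xs, ys))" "i < GG d (xs, ys) ! i" by auto
    show "i \<in> {..<d}"
    proof (rule ccontr)
      assume "i \<notin> {..<d}"
      then have "\<not> i < d" by simp
      then show False using i Gnth[OF i(1)] K_le[of i] by simp
    qed
  next
    fix i assume "i \<in> {..<d}"
    then have i: "i < d" by simp
    then have "i < length (GG d (xs, ys))" using d_le_lenG by simp
    then show "i \<in> {i. i < length (GG d (xs, ys)) \<and> i < GG d (xs, ys) ! i}" using Gnth i by simp
  qed
  then show ?thesis by (simp add: frob_d_def)
qed

lemma G_x: "i < d \<Longrightarrow> frob_x (GG d (xs, ys)) i = rev xs ! i"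
  using Gnth[of i] d_le_lenG by (simp add: frob_x_def)

lemma G_c: "j < d \<Longrightarrow> conj_part (GG d (xs, ys)) j = rev ys ! j + j + 1"
proof -
  assume j: "j < d"
  have "{i. i < length (GG d (xs, ys)) \<and> j < GG d (xs, ys) ! i} = {..< rev ys ! j + j + 1}"
  proof (rule set_eqI, rule iffI)
    fix i assume "i \<in> {i. i < length (GG d (xs, ys)) \<and> j < GG d (xs, ys) ! i}"
    then have i: "i < length (GG d (xs, ys))" "j < GG d (xs, ys) ! i" by auto
    show "i \<in> {..< rev ys ! j + j + 1}"
    proof (cases "i < d")
      case True then show ?thesis using ylow[OF j] by simp
    next
      case False
      then have "j < card {k. k < d \<and> i \<le> rev ys ! k + k}" using i Gnth[OF i(1)] by simp
      then show ?thesis using K_iff by simp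
    qed
  next
    fix i assume "i \<in> {..< rev ys ! j + j + 1}"
    then have i: "i \<le> rev ys ! j + j" by simp
    have il: "i < length (GG d (xs, ys))" using i ymono[of 0 j] j lenG by simp
    show "i \<in> {i. i < length (GG d (xs, ys)) \<and> j < GG d (xs, ys) ! i}"
    proof (cases "i < d")
      case True then show ?thesis using il Gnth[OF il] xlow[OF True] j by simp
    next
      case False
      have "j < card {k. k < d \<and> i \<le> rev ys ! k + k}" using K_iff j i by simp
      then show ?thesis using il Gnth[OF il] False by simp
    qed
  qed
  then show ?thesis by (simp add: conj_part_def)
qed

lemma G_y: "j < d \<Longrightarrow> frob_y (GG d (xs, ys)) j = rev ys ! j"
  using G_c by (simp add: frob_y_def)

lemma FG: "FF d (GG d (xs, ys)) = (xs, ys)"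
proof -
  have "map (frob_x (GG d (xs, ys))) [0..<d] = rev xs"
    by (rule nth_equalityI) (simp_all add: lx G_x)
  moreover have "map (frob_y (GG d (xs, ys))) [0..<d] = rev ys"
    by (rule nth_equalityI) (simp_all add: ly G_y)
  ultimately show ?thesis by (simp add: FF_def)
qed

lemma G_sum: "sum_list (GG d (xs, ys)) = sum_list xs + sum_list ys + d"
proof -
  have "sum_list (GG d (xs, ys)) = (\<Sum>i<d. frob_x (GG d (xs, ys)) i) + (\<Sum>i<d. frob_y (GG d (xs, ys)) i) + d"
    using weight[OF G_sorted G_pos] G_d by simp
  also have "(\<Sum>i<d. frob_x (GG d (xs, ys)) i) = sum_list xs"
    using FG sum_rev_map[of "frob_x (GG d (xs, ys))" d] by (simp add: FF_def)
  also have "(\<Sum>i<d. frob_y (GG d (xs, ys)) i) = sum_list ys"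
    using FG sum_rev_map[of "frob_y (GG d (xs, ys))" d] by (simp add: FF_def)
  finally show ?thesis .
qed

end

lemma FF_bij: "1 \<le> d \<Longrightarrow> bij_betw (FF d) (AA n d) (BB n d)"
proof (rule bij_betw_imageI)
  assume d1: "1 \<le> d"
  show "inj_on (FF d) (AA n d)" using FF_inj[OF d1] .
  show "FF d ` AA n d = BB n d"
  proof
    show "FF d ` AA n d \<subseteq> BB n d" using FF_in by auto
  next
    show "BB n d \<subseteq> FF d ` AA n d"
    proof
      fix p assume p: "p \<in> BB n d"
      obtain xs ys where pe: "p = (xs, ys)" by fastforce
      have h: "sorted_wrt (<) xs" "sorted_wrt (<) ys" "length xs = d" "length ys = d" "sum_list xs + sum_list ys + d = n"
        using p pe by (auto simp: BB_def)
      have "GG d (xs, ys) \<in> AA n d"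
        using G_sorted[OF h(1-4) d1] G_pos[OF h(1-4) d1] G_sum[OF h(1-4) d1] G_d[OF h(1-4) d1] h(5)
        by (simp add: AA_def partitions_def)
      moreover have "FF d (GG d (xs, ys)) = p" using FG[OF h(1-4) d1] pe by simp
      ultimately show "p \<in> FF d ` AA n d" by force
    qed
  qed
qed

fun qb :: "nat \<Rightarrow> nat \<Rightarrow> rat fps" where
  "qb n 0 = 1"
| "qb 0 (Suc k) = 0"
| "qb (Suc n) (Suc k) = qb n k + fps_X ^ Suc k * qb n (Suc k)"

lemma qb_gt: "n < k \<Longrightarrow> qb n k = 0"
proof (induction n arbitrary: k)
  case 0 then show ?case by (cases k) auto
next
  case (Suc n) then show ?case by (cases k) auto
qed

lemma qb_nn[simp]: "qb n n = 1"
  by (induction n) (simp_all add: qb_gt)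

lemma qpoch_0[simp]: "qpoch (fps_X::rat fps) 0 = 1"
  by (simp add: qpoch_def)

lemma qpoch_Suc: "qpoch (fps_X::rat fps) (Suc n) = qpoch fps_X n * (1 - fps_X ^ Suc n)"
  by (simp add: qpoch_def)

lemma qpoch_nth0: "fps_nth (qpoch (fps_X::rat fps) n) 0 = 1"
  by (induction n) (simp_all add: qpoch_Suc)

lemma qpoch_nz: "qpoch (fps_X::rat fps) n \<noteq> 0"
  using qpoch_nth0[of n] by auto

lemma qb_prod: "k \<le> n \<Longrightarrow> qb n k * qpoch fps_X k * qpoch fps_X (n - k) = qpoch fps_X n"
proof (induction n arbitrary: k)
  case 0 then show ?case by simp
next
  case (Suc n)
  show ?case
  proof (cases k)
    case 0 then show ?thesis by simp
  next
    case (Suc j)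
    with Suc.prems have j: "j \<le> n" by simp
    show ?thesis
    proof (cases "j = n")
      case True
      then show ?thesis using Suc Suc.IH[of n] by (simp add: qb_gt qpoch_Suc)
    next
      case False
      then have jn: "j < n" using j by simp
      then obtain t where t: "n - j = Suc t" by (metis Suc_diff_Suc)
      have t2: "n - Suc j = t" using t by simp
      have e1: "qb n j * qpoch fps_X j * qpoch fps_X (Suc t) = qpoch fps_X n"
        using Suc.IH[of j] j t by simp
      have e2: "qb n (Suc j) * qpoch fps_X (Suc j) * qpoch fps_X t = qpoch fps_X n"
        using Suc.IH[of "Suc j"] jn t2 by simp
      have "qb (Suc n) (Suc j) * qpoch fps_X (Suc j) * qpoch fps_X (Suc n - Suc j)
          = (qb n j * qpoch fps_X j * qpoch fps_X (Suc t)) * (1 - fps_X ^ Suc j)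
            + fps_X ^ Suc j * (qb n (Suc j) * qpoch fps_X (Suc j) * qpoch fps_X t) * (1 - fps_X ^ Suc t)"
        using t by (simp add: qpoch_Suc algebra_simps)
      also have "\<dots> = qpoch fps_X n * (1 - fps_X ^ Suc n)"
      proof -
        have n_eq: "Suc n = Suc j + Suc t" using t jn by simp
        have "fps_X ^ Suc n = fps_X ^ Suc j * (fps_X::rat fps) ^ Suc t"
          by (simp only: n_eq power_add)
        then show ?thesis using e1 e2 by (simp add: algebra_simps)
      qed
      finally show ?thesis using Suc by (simp add: qpoch_Suc)
    qed
  qed
qed


lemma qb_sym: "k \<le> n \<Longrightarrow> qb n k = qb n (n - k)"
proof -
  assume k: "k \<le> n"
  have "qb n k * (qpoch fps_X k * qpoch fps_X (n - k)) = qb n (n - k) * (qpoch fps_X k * qpoch fps_X (n - k))"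
    using qb_prod[OF k] qb_prod[of "n-k" n] k by (simp add: algebra_simps)
  moreover have "qpoch fps_X k * qpoch fps_X (n - k) \<noteq> (0::rat fps)"
    using qpoch_nz by simp
  ultimately show ?thesis by simp
qed

lemma qb_pascal2: "k \<le> n \<Longrightarrow> qb (Suc n) (Suc k) = qb n (Suc k) + fps_X ^ (n - k) * qb n k"
proof (cases "k = n")
  case True
  then show ?thesis by (simp add: qb_gt)
next
  case False
  assume "k \<le> n"
  then have kn: "k < n" using False by simp
  then obtain t where t: "n - k = Suc t" by (metis Suc_diff_Suc)
  have "qb (Suc n) (Suc k) = qb (Suc n) (Suc n - Suc k)" using kn by (intro qb_sym) simp
  also have "Suc n - Suc k = Suc t" using t by simp
  also have "qb (Suc n) (Suc t) = qb n t + fps_X ^ Suc t * qb n (Suc t)" by simp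
  also have "qb n t = qb n (Suc k)"
  proof -
    have "n - Suc k = t" using t by simp
    then show ?thesis using qb_sym[of "Suc k" n] kn by simp
  qed
  also have "qb n (Suc t) = qb n k" using qb_sym[of k n] kn t by simp
  finally show ?thesis using t by simp
qed

lemma qb_ratio1: "k \<le> n \<Longrightarrow> (1 - fps_X ^ Suc k) * qb (Suc n) (Suc k) = (1 - fps_X ^ Suc n) * qb n k"
proof -
  assume k: "k \<le> n"
  have "((1 - fps_X ^ Suc k) * qb (Suc n) (Suc k)) * (qpoch fps_X k * qpoch fps_X (n - k))
      = qb (Suc n) (Suc k) * qpoch fps_X (Suc k) * qpoch fps_X (Suc n - Suc k)"
    by (simp add: qpoch_Suc algebra_simps)
  also have "\<dots> = qpoch fps_X (Suc n)" using k by (intro qb_prod) simp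
  also have "\<dots> = ((1 - fps_X ^ Suc n) * qb n k) * (qpoch fps_X k * qpoch fps_X (n - k))"
    using qb_prod[OF k] by (simp add: qpoch_Suc algebra_simps)
  finally show ?thesis using qpoch_nz[of k] qpoch_nz[of "n-k"] by simp
qed

lemma qb_ratio2: "k \<le> n \<Longrightarrow> (1 - fps_X ^ (Suc n - k)) * qb (Suc n) k = (1 - fps_X ^ Suc n) * qb n k"
proof -
  assume k: "k \<le> n"
  have e: "Suc n - k = Suc (n - k)" using k by simp
  have "((1 - fps_X ^ (Suc n - k)) * qb (Suc n) k) * (qpoch fps_X k * qpoch fps_X (n - k))
      = qb (Suc n) k * qpoch fps_X k * qpoch fps_X (Suc n - k)"
    unfolding e by (simp add: qpoch_Suc algebra_simps)
  also have "\<dots> = qpoch fps_X (Suc n)" using k by (intro qb_prod) simp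
  also have "\<dots> = ((1 - fps_X ^ Suc n) * qb n k) * (qpoch fps_X k * qpoch fps_X (n - k))"
    using qb_prod[OF k] by (simp add: qpoch_Suc algebra_simps)
  finally show ?thesis using qpoch_nz[of k] qpoch_nz[of "n-k"] by simp
qed

lemma qbinom_qb: "k \<le> n \<Longrightarrow> qbinom n k = qb n k"
proof -
  assume k: "k \<le> n"
  have "qpoch fps_X n = qb n k * (qpoch fps_X k * qpoch fps_X (n - k))"
    using qb_prod[OF k] by (simp add: mult.assoc)
  moreover have "qpoch fps_X k * qpoch fps_X (n - k) \<noteq> (0::rat fps)"
    using qpoch_nz by simp
  ultimately show ?thesis unfolding qbinom_def using k by (simp add: fps_divide_times_eq)
qed

fun nX :: "bool list \<Rightarrow> nat" where
  "nX [] = 0" | "nX (c # r) = (if c then Suc (nX r) else nX r)"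
fun nY :: "bool list \<Rightarrow> nat" where
  "nY [] = 0" | "nY (c # r) = (if c then nY r else Suc (nY r))"

lemma nXY_len: "nX r + nY r = length r"
  by (induction r) auto

fun wstat :: "bool list \<Rightarrow> nat" where
  "wstat [] = 0"
| "wstat (c # r) = wstat r + (if r = [] then 0 else if c \<and> \<not> hd r then 0 else length r)"

definition upd :: "nat \<times> bool \<Rightarrow> bool \<Rightarrow> nat \<times> bool" where
  "upd st s = (if fst st = 0 then 1 else if snd st = s then fst st else Suc (fst st), s)"

fun es :: "bool list \<Rightarrow> nat \<times> bool" where
  "es [] = (0, False)"
| "es (c # r) = (if nX r = nY r then upd (es r) c else es r)"

lemma es_pos: "r \<noteq> [] \<Longrightarrow> 1 \<le> fst (es r)"
proof (induction r)
  case Nil then show ?case by simp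
next
  case (Cons c r)
  show ?case
  proof (cases "nX r = nY r")
    case True then show ?thesis by (simp add: upd_def)
  next
    case False
    then have "r \<noteq> []" by auto
    then show ?thesis using Cons False by simp
  qed
qed

lemma es_unbal: "nX r \<noteq> nY r \<Longrightarrow> snd (es r) = (nY r < nX r)"
proof (induction r)
  case Nil then show ?case by simp
next
  case (Cons c r)
  show ?case
  proof (cases "nX r = nY r")
    case True then show ?thesis using Cons.prems by (simp add: upd_def)
  next
    case False
    have e: "es (c # r) = es r" using False by simp
    have "(nY (c#r) < nX (c#r)) = (nY r < nX r)" using False Cons.prems by (cases c) auto
    then show ?thesis using Cons.IH False e by simp
  qed
qed

lemma es_bal_hd: assumes "r \<noteq> []" "nX r = nY r" shows "snd (es r) = (\<not> hd r)"
proof -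
  obtain c r' where r: "r = c # r'" using assms(1) by (cases r) auto
  have ne: "nX r' \<noteq> nY r'" using assms(2) r by (cases c) auto
  have e: "es r = es r'" using ne r by simp
  have "snd (es r') = (nY r' < nX r')" using es_unbal[OF ne] .
  moreover have "(nY r' < nX r') = (\<not> c)" using assms(2) r by (cases c) auto
  ultimately show ?thesis using e r by simp
qed

declare es.simps(2)[simp del] wstat.simps(2)[simp del]

definition W :: "nat \<Rightarrow> bool list set" where "W n = {r. length r = n}"

lemma W_finite: "finite (W n)"
  using finite_lists_length_eq[of "UNIV :: bool set" n] by (simp add: W_def)

lemma W_Suc: "W (Suc n) = Cons True ` W n \<union> Cons False ` W n"
proof -
  have "r \<in> Cons True ` W n \<union> Cons False ` W n" if "r \<in> W (Suc n)" for r
  proof -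
    from that obtain c r' where r: "r = c # r'" and "length r' = n"
      by (cases r) (auto simp: W_def)
    then show ?thesis by (cases c) (auto simp: W_def)
  qed
  then show ?thesis by (auto simp: W_def)
qed

lemma sum_W_Suc: "(\<Sum>r\<in>W (Suc n). f r) = (\<Sum>r\<in>W n. f (True # r)) + (\<Sum>r\<in>W n. f (False # r))"
proof -
  have "(\<Sum>r\<in>W (Suc n). f r) = (\<Sum>r\<in>Cons True ` W n. f r) + (\<Sum>r\<in>Cons False ` W n. f r)"
    unfolding W_Suc by (rule sum.union_disjoint) (auto simp: W_finite)
  also have "\<dots> = (\<Sum>r\<in>W n. f (True # r)) + (\<Sum>r\<in>W n. f (False # r))"
    by (simp add: sum.reindex)
  finally show ?thesis .
qed

lemma W_0: "W 0 = {[]}" by (auto simp: W_def)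

definition PS :: "nat \<Rightarrow> bool \<Rightarrow> nat \<Rightarrow> bool \<Rightarrow> bool list \<Rightarrow> bool" where
  "PS a \<sigma> R l r \<longleftrightarrow> nX r = a \<and> r \<noteq> [] \<and> hd r = l \<and> snd (es r) = \<sigma> \<and> R \<le> fst (es r)"

definition S :: "nat \<Rightarrow> nat \<Rightarrow> bool \<Rightarrow> nat \<Rightarrow> bool \<Rightarrow> rat fps" where
  "S a b \<sigma> R l = (\<Sum>r\<in>W (a+b). if PS a \<sigma> R l r then fps_X ^ wstat r else 0)"

lemma S_expand: "S a b \<sigma> R l = (\<Sum>r\<in>W (a+b-1). if PS a \<sigma> R l (l # r) then (fps_X::rat fps) ^ wstat (l # r) else 0)"
  if pos0: "0 < a + b"
proof -
  obtain n where n: "a + b = Suc n" using pos0 by (cases "a + b") auto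
  have "S a b \<sigma> R l = (\<Sum>r\<in>W (Suc n). if PS a \<sigma> R l r then (fps_X::rat fps) ^ wstat r else 0)"
    by (simp add: S_def n)
  also have "\<dots> = (\<Sum>r\<in>W n. if PS a \<sigma> R l (True # r) then (fps_X::rat fps) ^ wstat (True # r) else 0)
     + (\<Sum>r\<in>W n. if PS a \<sigma> R l (False # r) then (fps_X::rat fps) ^ wstat (False # r) else 0)"
    by (rule sum_W_Suc)
  also have "\<dots> = (\<Sum>r\<in>W n. if PS a \<sigma> R l (l # r) then (fps_X::rat fps) ^ wstat (l # r) else 0)"
    by (induction l) (simp_all add: PS_def)
  finally show ?thesis using n by simp
qed

lemma len_nY: "r \<in> W (a + b) \<Longrightarrow> nX r = a \<Longrightarrow> nY r = b"
  using nXY_len[of r] by (simp add: W_def)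

lemma stepX_unbal:
  assumes "a \<noteq> b"
  shows "S (Suc a) b \<sigma> R True = fps_X ^ (a+b) * S a b \<sigma> R True + S a b \<sigma> R False"
proof -
  have pos: "0 < a + b" using assms by (cases a; cases b) auto
  have "S (Suc a) b \<sigma> R True = (\<Sum>r\<in>W (a+b). if PS (Suc a) \<sigma> R True (True # r) then fps_X ^ wstat (True # r) else 0)"
    using S_expand[of "Suc a" b] by simp
  also have "\<dots> = (\<Sum>r\<in>W (a+b). fps_X ^ (a+b) * (if PS a \<sigma> R True r then fps_X ^ wstat r else 0)
       + (if PS a \<sigma> R False r then fps_X ^ wstat r else 0))"
  proof (rule sum.cong[OF refl])
    fix r assume r: "r \<in> W (a+b)"
    then have ne: "r \<noteq> []" and len: "length r = a + b" using pos by (auto simp: W_def)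
    show "(if PS (Suc a) \<sigma> R True (True # r) then (fps_X::rat fps) ^ wstat (True # r) else 0) =
      fps_X ^ (a+b) * (if PS a \<sigma> R True r then fps_X ^ wstat r else 0)
       + (if PS a \<sigma> R False r then fps_X ^ wstat r else 0)"
    proof (cases "nX r = a")
      case True
      then have "nY r = b" using len_nY r by simp
      then have "nX r \<noteq> nY r" using True assms by simp
      then have es1: "es (True # r) = es r" by (simp add: es.simps)
      show ?thesis
      proof (cases "hd r")
        case True
        then have "wstat (True # r) = wstat r + (a + b)" using ne len by (simp add: wstat.simps)
        then have xw: "(fps_X::rat fps) ^ wstat (True # r) = fps_X ^ (a+b) * fps_X ^ wstat r"
          by (simp add: power_add mult.commute)
        show ?thesis using es1 True \<open>nX r = a\<close> ne by (simp add: PS_def xw)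
      next
        case False
        then have "wstat (True # r) = wstat r" using ne by (simp add: wstat.simps)
        then show ?thesis using es1 False \<open>nX r = a\<close> ne by (simp add: PS_def)
      qed
    next
      case False then show ?thesis by (simp add: PS_def)
    qed
  qed
  also have "\<dots> = fps_X ^ (a+b) * S a b \<sigma> R True + S a b \<sigma> R False"
    by (simp add: S_def sum.distrib flip: sum_distrib_left)
  finally show ?thesis .
qed


lemma stepY_unbal:
  assumes "a \<noteq> b"
  shows "S a (Suc b) \<sigma> R False = fps_X ^ (a+b) * (S a b \<sigma> R True + S a b \<sigma> R False)"
proof -
  have pos: "0 < a + b" using assms by (cases a; cases b) auto
  have "S a (Suc b) \<sigma> R False = (\<Sum>r\<in>W (a+b). if PS a \<sigma> R False (False # r) then fps_X ^ wstat (False # r) else 0)"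
    using S_expand[of a "Suc b"] by simp
  also have "\<dots> = (\<Sum>r\<in>W (a+b). fps_X ^ (a+b) * ((if PS a \<sigma> R True r then fps_X ^ wstat r else 0)
       + (if PS a \<sigma> R False r then fps_X ^ wstat r else 0)))"
  proof (rule sum.cong[OF refl])
    fix r assume r: "r \<in> W (a+b)"
    then have ne: "r \<noteq> []" and len: "length r = a + b" using pos by (auto simp: W_def)
    show "(if PS a \<sigma> R False (False # r) then (fps_X::rat fps) ^ wstat (False # r) else 0) =
      fps_X ^ (a+b) * ((if PS a \<sigma> R True r then fps_X ^ wstat r else 0)
       + (if PS a \<sigma> R False r then fps_X ^ wstat r else 0))"
    proof (cases "nX r = a")
      case True
      then have "nY r = b" using len_nY r by simp
      then have "nX r \<noteq> nY r" using True assms by simp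
      then have es1: "es (False # r) = es r" by (simp add: es.simps)
      have "wstat (False # r) = wstat r + (a + b)" using ne len by (simp add: wstat.simps)
      then have xw: "(fps_X::rat fps) ^ wstat (False # r) = fps_X ^ (a+b) * fps_X ^ wstat r"
        by (simp add: power_add mult.commute)
      show ?thesis using es1 \<open>nX r = a\<close> ne
        by (cases "hd r") (simp_all add: PS_def xw distrib_left)
    next
      case False then show ?thesis by (simp add: PS_def)
    qed
  qed
  also have "\<dots> = fps_X ^ (a+b) * (S a b \<sigma> R True + S a b \<sigma> R False)"
    by (simp add: S_def sum.distrib flip: sum_distrib_left)
  finally show ?thesis .
qed

lemma stepX_bal:
  assumes "1 \<le> R"
  shows "S (Suc b) b \<sigma> R True = (if \<sigma> then (if b = 0 then (if R \<le> 1 then 1 else 0)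
     else fps_X ^ (2*b) * S b b False (max 1 (R - 1)) True + S b b True R False) else 0)"
proof (cases "b = 0")
  case True
  then show ?thesis using S_expand[of 1 0 \<sigma> R True] by (simp add: W_0 PS_def upd_def es.simps wstat.simps)
next
  case False
  have pos: "0 < b + b" using False by simp
  have "S (Suc b) b \<sigma> R True = (\<Sum>r\<in>W (b+b). if PS (Suc b) \<sigma> R True (True # r) then fps_X ^ wstat (True # r) else 0)"
    using S_expand[of "Suc b" b] by simp
  also have "\<dots> = (\<Sum>r\<in>W (b+b). if \<sigma> then fps_X ^ (2*b) * (if PS b False (max 1 (R - 1)) True r then fps_X ^ wstat r else 0)
       + (if PS b True R False r then fps_X ^ wstat r else 0) else 0)"
  proof (rule sum.cong[OF refl])
    fix r assume r: "r \<in> W (b+b)"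
    then have ne: "r \<noteq> []" and len: "length r = b + b" using pos by (auto simp: W_def)
    show "(if PS (Suc b) \<sigma> R True (True # r) then (fps_X::rat fps) ^ wstat (True # r) else 0) =
      (if \<sigma> then fps_X ^ (2*b) * (if PS b False (max 1 (R - 1)) True r then fps_X ^ wstat r else 0)
       + (if PS b True R False r then fps_X ^ wstat r else 0) else 0)"
    proof (cases "nX r = b")
      case True
      then have bal: "nX r = nY r" using len_nY[OF r] by simp
      have e1: "1 \<le> fst (es r)" using es_pos[OF ne] .
      have e2: "snd (es r) = (\<not> hd r)" using es_bal_hd[OF ne bal] .
      obtain B s where Bs: "es r = (B, s)" by fastforce
      show ?thesis
      proof (cases "hd r")
        case True
        then have w: "wstat (True # r) = wstat r + 2 * b" using ne len by (simp add: wstat.simps)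
        then have xw: "(fps_X::rat fps) ^ wstat (True # r) = fps_X ^ (2*b) * fps_X ^ wstat r"
          by (simp add: power_add mult.commute)
        have "es (True # r) = (Suc B, True)" using bal Bs e1 e2 True by (simp add: upd_def es.simps)
        moreover have "(R \<le> Suc B) = (max 1 (R - 1) \<le> B)" using e1 Bs by auto
        ultimately show ?thesis using xw True \<open>nX r = b\<close> ne Bs e2
          by (simp add: PS_def)
      next
        case False
        then have w: "wstat (True # r) = wstat r" using ne by (simp add: wstat.simps)
        have "es (True # r) = (B, True)" using bal Bs e1 e2 False by (simp add: upd_def es.simps)
        then show ?thesis using w False \<open>nX r = b\<close> ne Bs e2
          by (simp add: PS_def)
      qed
    next
      case False then show ?thesis by (simp add: PS_def)
    qed
  qed
  also have "\<dots> = (if \<sigma> then fps_X ^ (2*b) * S b b False (max 1 (R - 1)) True + S b b True R False else 0)"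
    by (simp add: S_def sum.distrib flip: sum_distrib_left)
  finally show ?thesis using False by (simp only: if_False simp_thms)
qed

lemma stepY_bal:
  assumes "1 \<le> R"
  shows "S a (Suc a) \<sigma> R False = (if \<not> \<sigma> then (if a = 0 then (if R \<le> 1 then 1 else 0)
     else fps_X ^ (2*a) * (S a a False R True + S a a True (max 1 (R - 1)) False)) else 0)"
proof (cases "a = 0")
  case True
  then show ?thesis using S_expand[of 0 1 \<sigma> R False] by (simp add: W_0 PS_def upd_def es.simps wstat.simps)
next
  case False
  have pos: "0 < a + a" using False by simp
  have "S a (Suc a) \<sigma> R False = (\<Sum>r\<in>W (a+a). if PS a \<sigma> R False (False # r) then fps_X ^ wstat (False # r) else 0)"
    using S_expand[of a "Suc a"] by simp
  also have "\<dots> = (\<Sum>r\<in>W (a+a). if \<not> \<sigma> then fps_X ^ (2*a) * ((if PS a False R True r then fps_X ^ wstat r else 0)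
       + (if PS a True (max 1 (R - 1)) False r then fps_X ^ wstat r else 0)) else 0)"
  proof (rule sum.cong[OF refl])
    fix r assume r: "r \<in> W (a+a)"
    then have ne: "r \<noteq> []" and len: "length r = a + a" using pos by (auto simp: W_def)
    show "(if PS a \<sigma> R False (False # r) then (fps_X::rat fps) ^ wstat (False # r) else 0) =
      (if \<not> \<sigma> then fps_X ^ (2*a) * ((if PS a False R True r then fps_X ^ wstat r else 0)
       + (if PS a True (max 1 (R - 1)) False r then fps_X ^ wstat r else 0)) else 0)"
    proof (cases "nX r = a")
      case True
      then have bal: "nX r = nY r" using len_nY[OF r] by simp
      have e1: "1 \<le> fst (es r)" using es_pos[OF ne] .
      have e2: "snd (es r) = (\<not> hd r)" using es_bal_hd[OF ne bal] .
      obtain B s where Bs: "es r = (B, s)" by fastforce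
      have w: "wstat (False # r) = wstat r + 2 * a" using ne len by (simp add: wstat.simps)
      then have xw: "(fps_X::rat fps) ^ wstat (False # r) = fps_X ^ (2*a) * fps_X ^ wstat r"
        by (simp add: power_add mult.commute)
      show ?thesis
      proof (cases "hd r")
        case True
        have "es (False # r) = (B, False)" using bal Bs e1 e2 True by (simp add: upd_def es.simps)
        then show ?thesis using xw True \<open>nX r = a\<close> ne Bs e2
          by (simp add: PS_def)
      next
        case False
        have "es (False # r) = (Suc B, False)" using bal Bs e1 e2 False by (simp add: upd_def es.simps)
        moreover have "(R \<le> Suc B) = (max 1 (R - 1) \<le> B)" using e1 Bs by auto
        ultimately show ?thesis using xw False \<open>nX r = a\<close> ne Bs e2
          by (simp add: PS_def)
      qed
    next
      case False then show ?thesis by (simp add: PS_def)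
    qed
  qed
  also have "\<dots> = (if \<not> \<sigma> then fps_X ^ (2*a) * (S a a False R True + S a a True (max 1 (R - 1)) False) else 0)"
    by (simp add: S_def sum.distrib flip: sum_distrib_left)
  finally show ?thesis using False by (simp only: if_False simp_thms)
qed

fun tri :: "nat \<Rightarrow> nat" where "tri 0 = 0" | "tri (Suc n) = tri n + n"

definition CTX :: "nat \<Rightarrow> nat \<Rightarrow> nat \<Rightarrow> rat fps" where
  "CTX a b R = (if b < a \<and> R \<le> Suc b then fps_X ^ (tri a + tri b + (R - 1) * (a - b - 1) + tri R) * qb (a + b - 1) (Suc b - R) else 0)"
definition CTY :: "nat \<Rightarrow> nat \<Rightarrow> nat \<Rightarrow> rat fps" where
  "CTY a b R = (if b \<le> a \<and> R \<le> b then fps_X ^ (tri a + tri b + a + (R - 1) * (a - b) + tri R) * qb (a + b - 1) (b - R) else 0)"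
definition CFX :: "nat \<Rightarrow> nat \<Rightarrow> nat \<Rightarrow> rat fps" where
  "CFX a b R = (if a \<le> b \<and> R \<le> a then fps_X ^ (tri a + tri b + (R - 1) * (b - a) + tri R) * qb (a + b - 1) (a - R) else 0)"
definition CFY :: "nat \<Rightarrow> nat \<Rightarrow> nat \<Rightarrow> rat fps" where
  "CFY a b R = (if a < b \<and> R \<le> Suc a then fps_X ^ (tri a + tri b + a + (R - 1) * (b - a - 1) + tri R) * qb (a + b - 1) (Suc a - R) else 0)"

declare qb.simps(3)[simp del]

lemma pascal1: "qb (Suc m) (Suc k) = qb m k + fps_X ^ Suc k * qb m (Suc k)"
  by (simp add: qb.simps)

lemma comb1: "e2 = e1 \<Longrightarrow> c + e3 = e1 + Suc k \<Longrightarrow>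
  (fps_X::rat fps) ^ e1 * qb (Suc m) (Suc k) = fps_X ^ c * (fps_X ^ e3 * qb m (Suc k)) + fps_X ^ e2 * qb m k"
proof -
  assume h: "e2 = e1" "c + e3 = e1 + Suc k"
  have "(fps_X::rat fps) ^ c * (fps_X ^ e3 * qb m (Suc k)) = fps_X ^ (c + e3) * qb m (Suc k)"
    by (simp only: power_add mult.assoc)
  also have "\<dots> = fps_X ^ e1 * (fps_X ^ Suc k * qb m (Suc k))"
    by (simp only: h(2) power_add mult.assoc)
  finally show ?thesis unfolding h(1) pascal1 by (simp only: distrib_left add.commute)
qed

lemma comb2: "k \<le> m \<Longrightarrow> e2 = e1 \<Longrightarrow> c + e3 = e1 + (m - k) \<Longrightarrow>
  (fps_X::rat fps) ^ e1 * qb (Suc m) (Suc k) = fps_X ^ c * (fps_X ^ e3 * qb m k) + fps_X ^ e2 * qb m (Suc k)"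
proof -
  assume h: "k \<le> m" "e2 = e1" "c + e3 = e1 + (m - k)"
  have "(fps_X::rat fps) ^ c * (fps_X ^ e3 * qb m k) = fps_X ^ (c + e3) * qb m k"
    by (simp only: power_add mult.assoc)
  also have "\<dots> = fps_X ^ e1 * (fps_X ^ (m - k) * qb m k)"
    by (simp only: h(3) power_add mult.assoc)
  finally show ?thesis unfolding h(2) qb_pascal2[OF h(1)] by (simp only: distrib_left add.commute)
qed

lemma comb3: "k \<le> m \<Longrightarrow> c + e2 = e1 \<Longrightarrow> c + e3 = e1 + (m - k) \<Longrightarrow>
  (fps_X::rat fps) ^ e1 * qb (Suc m) (Suc k) = fps_X ^ c * (fps_X ^ e2 * qb m (Suc k) + fps_X ^ e3 * qb m k)"
proof -
  assume h: "k \<le> m" "c + e2 = e1" "c + e3 = e1 + (m - k)"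
  have "(fps_X::rat fps) ^ c * (fps_X ^ e2 * qb m (Suc k) + fps_X ^ e3 * qb m k)
     = fps_X ^ (c + e2) * qb m (Suc k) + fps_X ^ (c + e3) * qb m k"
    by (simp only: power_add mult.assoc distrib_left)
  also have "\<dots> = fps_X ^ e1 * qb m (Suc k) + fps_X ^ e1 * (fps_X ^ (m - k) * qb m k)"
    by (simp only: h(2) h(3) power_add mult.assoc)
  finally show ?thesis unfolding qb_pascal2[OF h(1)] by (simp only: distrib_left)
qed

lemma comb4: "c + e2 = e1 \<Longrightarrow> c + e3 = e1 + Suc k \<Longrightarrow>
  (fps_X::rat fps) ^ e1 * qb (Suc m) (Suc k) = fps_X ^ c * (fps_X ^ e2 * qb m k + fps_X ^ e3 * qb m (Suc k))"
proof -
  assume h: "c + e2 = e1" "c + e3 = e1 + Suc k"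
  have "(fps_X::rat fps) ^ c * (fps_X ^ e2 * qb m k + fps_X ^ e3 * qb m (Suc k))
     = fps_X ^ (c + e2) * qb m k + fps_X ^ (c + e3) * qb m (Suc k)"
    by (simp only: power_add mult.assoc distrib_left)
  also have "\<dots> = fps_X ^ e1 * qb m k + fps_X ^ e1 * (fps_X ^ Suc k * qb m (Suc k))"
    by (simp only: h(1) h(2) power_add mult.assoc)
  finally show ?thesis unfolding pascal1 by (simp only: distrib_left)
qed

lemma idTX:
  assumes ab: "a \<noteq> b" and R1: "1 \<le> R"
  shows "CTX (Suc a) b R = fps_X ^ (a+b) * CTX a b R + CTY a b R"
proof -
  obtain r where R: "R = Suc r" using R1 by (cases R) auto
  consider (z) "\<not> (b < a \<and> r \<le> b)" | (e) "b < a" "r = b" | (m) "b < a" "r < b"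
    by linarith
  then show ?thesis
  proof cases
    case z
    then show ?thesis using ab by (auto simp: CTX_def CTY_def R)
  next
    case e
    then obtain h where a: "a = Suc (b + h)" using less_iff_Suc_add by auto
    have l: "CTX (Suc a) b R = fps_X ^ (tri (Suc a) + tri b + b * Suc h + tri (Suc b))"
      by (simp add: CTX_def a R e)
    have r1: "CTX a b R = fps_X ^ (tri a + tri b + b * h + tri (Suc b))"
      by (simp add: CTX_def a R e)
    have r2: "CTY a b R = 0" by (simp add: CTY_def R e)
    show ?thesis unfolding l r1 r2 by (simp add: a power_add[symmetric] algebra_simps)
  next
    case m
    then obtain h where a: "a = Suc (b + h)" using less_iff_Suc_add by auto
    from m obtain k where b: "b = Suc (r + k)" using less_iff_Suc_add by auto
    have l: "CTX (Suc a) b R = fps_X ^ (tri (Suc a) + tri b + r * Suc h + tri (Suc r)) * qb (Suc (a + r + k)) (Suc k)"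
      by (simp add: CTX_def a b R ac_simps)
    have r1: "CTX a b R = fps_X ^ (tri a + tri b + r * h + tri (Suc r)) * qb (a + r + k) (Suc k)"
      by (simp add: CTX_def a b R ac_simps)
    have r2: "CTY a b R = fps_X ^ (tri a + tri b + a + r * Suc h + tri (Suc r)) * qb (a + r + k) k"
      by (simp add: CTY_def a b R ac_simps)
    show ?thesis unfolding l r1 r2 by (rule comb1) (simp_all add: a b)
  qed
qed

lemma idFX:
  assumes ab: "a \<noteq> b" and R1: "1 \<le> R"
  shows "CFX (Suc a) b R = fps_X ^ (a+b) * CFX a b R + CFY a b R"
proof -
  obtain r where R: "R = Suc r" using R1 by (cases R) auto
  consider (z) "\<not> (Suc a \<le> b \<and> r \<le> a)" | (e) "Suc a \<le> b" "r = a" | (m) "Suc a \<le> b" "r < a"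
    by linarith
  then show ?thesis
  proof cases
    case z
    then show ?thesis using ab by (auto simp: CFX_def CFY_def R)
  next
    case e
    then have "\<exists>h. b = Suc (a + h)" by (simp add: le_iff_add)
    then obtain h where b: "b = Suc (a + h)" by blast
    have l: "CFX (Suc a) b R = fps_X ^ (tri (Suc a) + tri b + a * h + tri (Suc a))"
      by (simp add: CFX_def b R e)
    have r1: "CFX a b R = 0" by (simp add: CFX_def R e)
    have r2: "CFY a b R = fps_X ^ (tri a + tri b + a + a * h + tri (Suc a))"
      by (simp add: CFY_def b R e)
    show ?thesis unfolding l r1 r2 by (simp add: algebra_simps)
  next
    case m
    then have "\<exists>h. b = Suc (a + h)" by (simp add: le_iff_add)
    then obtain h where b: "b = Suc (a + h)" by blast
    from m obtain k where a: "a = Suc (r + k)" using less_iff_Suc_add by auto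
    have l: "CFX (Suc a) b R = fps_X ^ (tri (Suc a) + tri b + r * h + tri (Suc r)) * qb (Suc (a + a + h)) (Suc k)"
      by (simp add: CFX_def a b R ac_simps)
    have r1: "CFX a b R = fps_X ^ (tri a + tri b + r * Suc h + tri (Suc r)) * qb (a + a + h) k"
      by (simp add: CFX_def a b R ac_simps)
    have r2: "CFY a b R = fps_X ^ (tri a + tri b + a + r * h + tri (Suc r)) * qb (a + a + h) (Suc k)"
      by (simp add: CFY_def a b R ac_simps)
    show ?thesis unfolding l r1 r2 by (rule comb2) (simp_all add: a b)
  qed
qed

lemma idTY:
  assumes ab: "a \<noteq> b" and R1: "1 \<le> R"
  shows "CTY a (Suc b) R = fps_X ^ (a+b) * (CTX a b R + CTY a b R)"
proof -
  obtain r where R: "R = Suc r" using R1 by (cases R) auto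
  consider (z) "\<not> (Suc b \<le> a \<and> r \<le> b)" | (e) "Suc b \<le> a" "r = b" | (m) "Suc b \<le> a" "r < b"
    by linarith
  then show ?thesis
  proof cases
    case z
    then show ?thesis using ab by (auto simp: CTX_def CTY_def R)
  next
    case e
    then have "\<exists>h. a = Suc (b + h)" by (simp add: le_iff_add)
    then obtain h where a: "a = Suc (b + h)" by blast
    have l: "CTY a (Suc b) R = fps_X ^ (tri a + tri (Suc b) + a + b * h + tri (Suc b))"
      by (simp add: CTY_def a R e)
    have r1: "CTX a b R = fps_X ^ (tri a + tri b + b * h + tri (Suc b))"
      by (simp add: CTX_def a R e)
    have r2: "CTY a b R = 0" by (simp add: CTY_def R e)
    show ?thesis unfolding l r1 r2 by (simp add: a power_add[symmetric] algebra_simps)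
  next
    case m
    then have "\<exists>h. a = Suc (b + h)" by (simp add: le_iff_add)
    then obtain h where a: "a = Suc (b + h)" by blast
    from m obtain k where b: "b = Suc (r + k)" using less_iff_Suc_add by auto
    have l: "CTY a (Suc b) R = fps_X ^ (tri a + tri (Suc b) + a + r * h + tri (Suc r)) * qb (Suc (a + r + k)) (Suc k)"
      by (simp add: CTY_def a b R ac_simps)
    have r1: "CTX a b R = fps_X ^ (tri a + tri b + r * h + tri (Suc r)) * qb (a + r + k) (Suc k)"
      by (simp add: CTX_def a b R ac_simps)
    have r2: "CTY a b R = fps_X ^ (tri a + tri b + a + r * Suc h + tri (Suc r)) * qb (a + r + k) k"
      by (simp add: CTY_def a b R ac_simps)
    show ?thesis unfolding l r1 r2 by (rule comb3) (simp_all add: a b)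
  qed
qed

lemma idFY:
  assumes ab: "a \<noteq> b" and R1: "1 \<le> R"
  shows "CFY a (Suc b) R = fps_X ^ (a+b) * (CFX a b R + CFY a b R)"
proof -
  obtain r where R: "R = Suc r" using R1 by (cases R) auto
  consider (z) "\<not> (a < b \<and> r \<le> a)" | (e) "a < b" "r = a" | (m) "a < b" "r < a"
    by linarith
  then show ?thesis
  proof cases
    case z
    then show ?thesis using ab by (auto simp: CFX_def CFY_def R)
  next
    case e
    then obtain h where b: "b = Suc (a + h)" using less_iff_Suc_add by auto
    have l: "CFY a (Suc b) R = fps_X ^ (tri a + tri (Suc b) + a + a * Suc h + tri (Suc a))"
      by (simp add: CFY_def b R e)
    have r1: "CFX a b R = 0" by (simp add: CFX_def R e)
    have r2: "CFY a b R = fps_X ^ (tri a + tri b + a + a * h + tri (Suc a))"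
      by (simp add: CFY_def b R e)
    show ?thesis unfolding l r1 r2 by (simp add: b power_add[symmetric] algebra_simps)
  next
    case m
    then obtain h where b: "b = Suc (a + h)" using less_iff_Suc_add by auto
    from m obtain k where a: "a = Suc (r + k)" using less_iff_Suc_add by auto
    have l: "CFY a (Suc b) R = fps_X ^ (tri a + tri (Suc b) + a + r * Suc h + tri (Suc r)) * qb (Suc (a + a + h)) (Suc k)"
      by (simp add: CFY_def a b R ac_simps)
    have r1: "CFX a b R = fps_X ^ (tri a + tri b + r * Suc h + tri (Suc r)) * qb (a + a + h) k"
      by (simp add: CFX_def a b R ac_simps)
    have r2: "CFY a b R = fps_X ^ (tri a + tri b + a + r * h + tri (Suc r)) * qb (a + a + h) (Suc k)"
      by (simp add: CFY_def a b R ac_simps)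
    show ?thesis unfolding l r1 r2 by (rule comb4) (simp_all add: a b)
  qed
qed

lemma idII:
  assumes b1: "1 \<le> b" and R1: "1 \<le> R"
  shows "CTX (Suc b) b R = fps_X ^ (2*b) * CFX b b (max 1 (R - 1)) + CTY b b R"
proof -
  obtain r where R: "R = Suc r" using R1 by (cases R) auto
  consider (z) "b < r" | (e) "r = b" | (m) "1 \<le> r" "r < b" | (o) "r = 0"
    by linarith
  then show ?thesis
  proof cases
    case z
    then show ?thesis by (auto simp: CTX_def CTY_def CFX_def R)
  next
    case e
    have mx: "max 1 (R - 1) = b" using b1 R e by simp
    have l: "CTX (Suc b) b R = fps_X ^ (tri (Suc b) + tri b + tri (Suc b))"
      by (simp add: CTX_def R e)
    have r1: "CFX b b b = fps_X ^ (tri b + tri b + tri b)"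
      by (simp add: CFX_def)
    have r2: "CTY b b R = 0" by (simp add: CTY_def R e)
    show ?thesis unfolding l r1 r2 mx by (simp add: power_add[symmetric] algebra_simps)
  next
    case m
    have mx: "max 1 (R - 1) = r" using m R by simp
    from m obtain k where b: "b = Suc (r + k)" using less_iff_Suc_add by auto
    have l: "CTX (Suc b) b R = fps_X ^ (tri (Suc b) + tri b + tri (Suc r)) * qb (Suc (b + r + k)) (Suc k)"
      by (simp add: CTX_def b R ac_simps)
    have r1: "CFX b b r = fps_X ^ (tri b + tri b + tri r) * qb (b + r + k) (Suc k)"
      using m by (simp add: CFX_def b ac_simps)
    have r2: "CTY b b R = fps_X ^ (tri b + tri b + b + tri (Suc r)) * qb (b + r + k) k"
      by (simp add: CTY_def b R ac_simps)
    show ?thesis unfolding l r1 r2 mx by (rule comb1) (simp_all add: b)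
  next
    case o
    have mx: "max 1 (R - 1) = 1" using o R by simp
    from b1 obtain k where b: "b = Suc k" by (cases b) auto
    have sy: "qb (b + k) k = qb (b + k) (Suc k)"
    proof -
      have "qb (b + k) k = qb (b + k) (b + k - k)" by (rule qb_sym) simp
      also have "b + k - k = Suc k" by (simp add: b)
      finally show ?thesis .
    qed
    have l: "CTX (Suc b) b R = fps_X ^ (tri (Suc b) + tri b) * qb (Suc (b + k)) (Suc k)"
      by (simp add: CTX_def b R o ac_simps)
    have "CFX b b 1 = fps_X ^ (tri b + tri b) * qb (b + k) k"
      by (simp add: CFX_def b ac_simps)
    then have r1: "CFX b b 1 = fps_X ^ (tri b + tri b) * qb (b + k) (Suc k)"
      by (simp only: sy)
    have r2: "CTY b b R = fps_X ^ (tri b + tri b + b) * qb (b + k) k"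
      by (simp add: CTY_def b R o ac_simps)
    show ?thesis unfolding l r1 r2 mx by (rule comb1) (simp_all add: b)
  qed
qed

lemma idIV:
  assumes a1: "1 \<le> a" and R1: "1 \<le> R"
  shows "CFY a (Suc a) R = fps_X ^ (2*a) * (CFX a a R + CTY a a (max 1 (R - 1)))"
proof -
  obtain r where R: "R = Suc r" using R1 by (cases R) auto
  consider (z) "a < r" | (e) "r = a" | (m) "1 \<le> r" "r < a" | (o) "r = 0"
    by linarith
  then show ?thesis
  proof cases
    case z
    then show ?thesis by (auto simp: CFY_def CTY_def CFX_def R)
  next
    case e
    have mx: "max 1 (R - 1) = a" using a1 R e by simp
    have l: "CFY a (Suc a) R = fps_X ^ (tri a + tri (Suc a) + a + tri (Suc a))"
      by (simp add: CFY_def R e)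
    have r1: "CFX a a R = 0" by (simp add: CFX_def R e)
    have r2: "CTY a a a = fps_X ^ (tri a + tri a + a + tri a)"
      by (simp add: CTY_def)
    show ?thesis unfolding l r1 r2 mx by (simp add: power_add[symmetric] algebra_simps)
  next
    case m
    have mx: "max 1 (R - 1) = r" using m R by simp
    from m obtain k where a: "a = Suc (r + k)" using less_iff_Suc_add by auto
    have l: "CFY a (Suc a) R = fps_X ^ (tri a + tri (Suc a) + a + tri (Suc r)) * qb (Suc (a + r + k)) (Suc k)"
      by (simp add: CFY_def a R ac_simps)
    have r1: "CFX a a R = fps_X ^ (tri a + tri a + tri (Suc r)) * qb (a + r + k) k"
      by (simp add: CFX_def a R ac_simps)
    have r2: "CTY a a r = fps_X ^ (tri a + tri a + a + tri r) * qb (a + r + k) (Suc k)"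
      using m by (simp add: CTY_def a ac_simps)
    show ?thesis unfolding l r1 r2 mx by (rule comb4) (simp_all add: a)
  next
    case o
    have mx: "max 1 (R - 1) = 1" using o R by simp
    from a1 obtain k where a: "a = Suc k" by (cases a) auto
    have sy: "qb (a + k) k = qb (a + k) (Suc k)"
    proof -
      have "qb (a + k) k = qb (a + k) (a + k - k)" by (rule qb_sym) simp
      also have "a + k - k = Suc k" by (simp add: a)
      finally show ?thesis .
    qed
    have l: "CFY a (Suc a) R = fps_X ^ (tri a + tri (Suc a) + a) * qb (Suc (a + k)) (Suc k)"
      by (simp add: CFY_def a R o ac_simps)
    have r1: "CFX a a R = fps_X ^ (tri a + tri a) * qb (a + k) k"
      by (simp add: CFX_def a R o ac_simps)
    have "CTY a a 1 = fps_X ^ (tri a + tri a + a) * qb (a + k) k"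
      by (simp add: CTY_def a ac_simps)
    then have r2: "CTY a a 1 = fps_X ^ (tri a + tri a + a) * qb (a + k) (Suc k)"
      by (simp only: sy)
    show ?thesis unfolding l r1 r2 mx by (rule comb4) (simp_all add: a)
  qed
qed

lemma idII0: "1 \<le> R \<Longrightarrow> CTX 1 0 R = (if R \<le> 1 then 1 else 0)"
  by (auto simp: CTX_def)
lemma idIV0: "1 \<le> R \<Longrightarrow> CFY 0 1 R = (if R \<le> 1 then 1 else 0)"
  by (auto simp: CFY_def)
lemma zFX: "CFX (Suc b) b R = 0" by (simp add: CFX_def)
lemma zTY: "CTY a (Suc a) R = 0" by (simp add: CTY_def)

definition Cf :: "nat \<Rightarrow> nat \<Rightarrow> bool \<Rightarrow> nat \<Rightarrow> bool \<Rightarrow> rat fps" where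
  "Cf a b \<sigma> R l = (if \<sigma> then (if l then CTX a b R else CTY a b R) else (if l then CFX a b R else CFY a b R))"

lemma S_a0: "S 0 b \<sigma> R True = 0"
  unfolding S_def
proof (rule sum.neutral, rule ballI)
  fix r assume "r \<in> W (0 + b)"
  have "\<not> PS 0 \<sigma> R True r"
  proof
    assume "PS 0 \<sigma> R True r"
    then obtain r' where "r = True # r'" "nX r = 0" unfolding PS_def by (cases r) auto
    then show False by simp
  qed
  then show "(if PS 0 \<sigma> R True r then (fps_X::rat fps) ^ wstat r else 0) = 0" by simp
qed

lemma S_b0: "S a 0 \<sigma> R False = 0"
  unfolding S_def
proof (rule sum.neutral, rule ballI)
  fix r assume r: "r \<in> W (a + 0)"
  have "\<not> PS a \<sigma> R False r"
  proof
    assume p: "PS a \<sigma> R False r"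
    then have "nY r = 0" using len_nY[of r a 0] r unfolding PS_def by simp
    moreover obtain r' where "r = False # r'" using p unfolding PS_def by (cases r) auto
    ultimately show False by simp
  qed
  then show "(if PS a \<sigma> R False r then (fps_X::rat fps) ^ wstat r else 0) = 0" by simp
qed

lemma S_closed: "a + b = n \<Longrightarrow> 1 \<le> R \<Longrightarrow> S a b \<sigma> R l = Cf a b \<sigma> R l"
proof (induction n arbitrary: a b \<sigma> R l)
  case 0
  then have ab: "a = 0" "b = 0" by auto
  have "S 0 0 \<sigma> R l = 0" unfolding S_def by (simp add: W_0 PS_def)
  moreover have "Cf 0 0 \<sigma> R l = 0" using 0 by (simp add: Cf_def CTX_def CTY_def CFX_def CFY_def)
  ultimately show ?case using ab by simp
next
  case (Suc n)
  note IH = Suc.IH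
  have R1: "1 \<le> R" by fact
  show ?case
  proof (cases l)
    case True
    show ?thesis
    proof (cases a)
      case 0
      then show ?thesis using True S_a0 R1 by (simp add: Cf_def CTX_def CFX_def)
    next
      case (Suc a')
      have n': "a' + b = n" using Suc Suc.prems by simp
      show ?thesis
      proof (cases "a' = b")
        case False
        have "S a b \<sigma> R l = fps_X ^ (a'+b) * S a' b \<sigma> R True + S a' b \<sigma> R False"
          using stepX_unbal[OF False] Suc True by simp
        also have "\<dots> = fps_X ^ (a'+b) * Cf a' b \<sigma> R True + Cf a' b \<sigma> R False"
          using IH[OF n' R1] by simp
        also have "\<dots> = Cf a b \<sigma> R l"
          using idTX[OF False R1] idFX[OF False R1] Suc True
          by (simp add: Cf_def)
        finally show ?thesis .
      next
        case eq: True
        show ?thesis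
        proof (cases \<sigma>)
          case sT: True
          show ?thesis
          proof (cases "b = 0")
            case True
            then show ?thesis using stepX_bal[OF R1, of b \<sigma>] idII0[OF R1] Suc eq sT \<open>l\<close>
              by (simp add: Cf_def)
          next
            case False
            have R2: "1 \<le> max 1 (R - 1)" by simp
            have n2: "b + b = n" using n' eq by simp
            have "S a b \<sigma> R l = fps_X ^ (2*b) * S b b False (max 1 (R - 1)) True + S b b True R False"
              using stepX_bal[OF R1, of b \<sigma>] Suc eq sT \<open>l\<close> False by simp
            also have "\<dots> = fps_X ^ (2*b) * CFX b b (max 1 (R - 1)) + CTY b b R"
              using IH[OF n2 R2, of False True] IH[OF n2 R1, of True False] by (simp add: Cf_def)
            also have "\<dots> = Cf a b \<sigma> R l"
              using idII[of b R] False R1 Suc eq sT \<open>l\<close> by (simp add: Cf_def)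
            finally show ?thesis .
          qed
        next
          case sF: False
          then show ?thesis using stepX_bal[OF R1, of b \<sigma>] zFX Suc eq \<open>l\<close> by (simp add: Cf_def)
        qed
      qed
    qed
  next
    case False
    show ?thesis
    proof (cases b)
      case 0
      then show ?thesis using False S_b0 R1 by (simp add: Cf_def CTY_def CFY_def)
    next
      case (Suc b')
      have n': "a + b' = n" using Suc Suc.prems by simp
      show ?thesis
      proof (cases "a = b'")
        case ne: False
        have "S a b \<sigma> R l = fps_X ^ (a+b') * (S a b' \<sigma> R True + S a b' \<sigma> R False)"
          using stepY_unbal[OF ne] Suc False by simp
        also have "\<dots> = fps_X ^ (a+b') * (Cf a b' \<sigma> R True + Cf a b' \<sigma> R False)"
          using IH[OF n' R1] by simp
        also have "\<dots> = Cf a b \<sigma> R l"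
          using idTY[OF ne R1] idFY[OF ne R1] Suc False
          by (simp add: Cf_def)
        finally show ?thesis .
      next
        case eq: True
        show ?thesis
        proof (cases \<sigma>)
          case sF: False
          show ?thesis
          proof (cases "a = 0")
            case True
            then show ?thesis using stepY_bal[OF R1, of a \<sigma>] idIV0[OF R1] Suc eq sF \<open>\<not> l\<close>
              by (simp add: Cf_def)
          next
            case a0: False
            have R2: "1 \<le> max 1 (R - 1)" by simp
            have n2: "a + a = n" using n' eq by simp
            have "S a b \<sigma> R l = fps_X ^ (2*a) * (S a a False R True + S a a True (max 1 (R - 1)) False)"
              using stepY_bal[OF R1, of a \<sigma>] Suc eq sF \<open>\<not> l\<close> a0 by simp
            also have "\<dots> = fps_X ^ (2*a) * (CFX a a R + CTY a a (max 1 (R - 1)))"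
              using IH[OF n2 R1, of False True] IH[OF n2 R2, of True False] by (simp add: Cf_def)
            also have "\<dots> = Cf a b \<sigma> R l"
              using idIV[of a R] a0 R1 Suc eq sF \<open>\<not> l\<close> by (simp add: Cf_def)
            finally show ?thesis .
          qed
        next
          case sT: True
          then show ?thesis using stepY_bal[OF R1, of a \<sigma>] zTY Suc eq \<open>\<not> l\<close> by (simp add: Cf_def)
        qed
      qed
    qed
  qed
qed

fun mrg :: "nat list \<Rightarrow> nat list \<Rightarrow> bool list" where
  "mrg [] [] = []"
| "mrg (x#xs) [] = True # mrg xs []"
| "mrg [] (y#ys) = False # mrg [] ys"
| "mrg (x#xs) (y#ys) = (if x \<le> y then True # mrg xs (y#ys) else False # mrg (x#xs) ys)"

lemma nX_mrg[simp]: "nX (mrg xs ys) = length xs"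
  by (induction xs ys rule: mrg.induct) auto
lemma nY_mrg[simp]: "nY (mrg xs ys) = length ys"
  by (induction xs ys rule: mrg.induct) auto
lemma len_mrg[simp]: "length (mrg xs ys) = length xs + length ys"
  by (induction xs ys rule: mrg.induct) auto

definition cs :: "nat list \<Rightarrow> nat list \<Rightarrow> bool list" where
  "cs xs ys = map (\<lambda>i. rev ys ! i < rev xs ! i) [0..<min (length xs) (length ys)]"

definition lz :: "bool list \<Rightarrow> nat \<times> bool" where "lz s = foldl upd (0, False) s"

lemma lz_snoc: "lz (s @ [t]) = upd (lz s) t" by (simp add: lz_def)

lemma upd_idem: "upd (upd st s) s = upd st s" by (simp add: upd_def)

lemma cs_consX:
  assumes "\<forall>y\<in>set ys. x \<le> y"
  shows "cs (x # xs) ys = cs xs ys @ (if length xs < length ys then [False] else [])"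
proof -
  let ?a = "length xs" and ?b = "length ys"
  have A: "\<And>i. i < min ?a ?b \<Longrightarrow> (rev ys ! i < rev (x # xs) ! i) = (rev ys ! i < rev xs ! i)"
    by (simp add: nth_append)
  show ?thesis
  proof (cases "?a < ?b")
    case True
    have m: "min (Suc ?a) ?b = Suc (min ?a ?b)" "min ?a ?b = ?a" using True by auto
    have "rev ys ! ?a \<in> set ys" using True by (simp add: rev_nth)
    then have "x \<le> rev ys ! ?a" using assms by blast
    then have "\<not> (rev ys ! ?a < rev (x # xs) ! ?a)" by (simp add: nth_append)
    then show ?thesis using True A unfolding cs_def m by simp
  next
    case False
    have m: "min (Suc ?a) ?b = min ?a ?b" using False by auto
    show ?thesis using False A unfolding cs_def m by simp
  qed
qed

lemma cs_consY:
  assumes "\<forall>x\<in>set xs. y < x"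
  shows "cs xs (y # ys) = cs xs ys @ (if length ys < length xs then [True] else [])"
proof -
  let ?a = "length xs" and ?b = "length ys"
  have A: "\<And>i. i < min ?a ?b \<Longrightarrow> (rev (y # ys) ! i < rev xs ! i) = (rev ys ! i < rev xs ! i)"
    by (simp add: nth_append)
  show ?thesis
  proof (cases "?b < ?a")
    case True
    have m: "min ?a (Suc ?b) = Suc (min ?a ?b)" "min ?a ?b = ?b" using True by auto
    have "rev xs ! ?b \<in> set xs" using True by (simp add: rev_nth)
    then have "y < rev xs ! ?b" using assms by blast
    then have "rev (y # ys) ! ?b < rev xs ! ?b" by (simp add: nth_append)
    then show ?thesis using True A unfolding cs_def m by simp
  next
    case False
    have m: "min ?a (Suc ?b) = min ?a ?b" using False by auto
    show ?thesis using False A unfolding cs_def m by simp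
  qed
qed

lemma es_mrg:
  "sorted_wrt (<) xs \<Longrightarrow> sorted_wrt (<) ys \<Longrightarrow>
   es (mrg xs ys) = (if length xs = length ys then lz (cs xs ys) else upd (lz (cs xs ys)) (length ys < length xs))"
proof (induction xs ys rule: mrg.induct)
  case 1
  then show ?case by (simp add: lz_def cs_def)
next
  case (2 x xs)
  then show ?case by (simp add: es.simps lz_def cs_def upd_def)
next
  case (3 y ys)
  then show ?case by (simp add: es.simps lz_def cs_def upd_def)
next
  case (4 x xs y ys)
  show ?case
  proof (cases "x \<le> y")
    case True
    have sx: "sorted_wrt (<) xs" using "4.prems" by simp
    have IH: "es (mrg xs (y#ys)) = (if length xs = length (y#ys) then lz (cs xs (y#ys))
       else upd (lz (cs xs (y#ys))) (length (y#ys) < length xs))"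
      using "4.IH"(1)[OF True sx "4.prems"(2)] .
    have mn: "\<forall>v\<in>set (y#ys). x \<le> v" using True "4.prems"(2) by auto
    have csq: "cs (x#xs) (y#ys) = cs xs (y#ys) @ (if length xs < length (y#ys) then [False] else [])"
      using cs_consX[OF mn] .
    have e: "es (mrg (x#xs) (y#ys)) = (if length xs = length (y#ys) then upd (es (mrg xs (y#ys))) True else es (mrg xs (y#ys)))"
      using True by (simp add: es.simps)
    show ?thesis
      unfolding e IH csq by (auto simp: lz_snoc upd_idem)
  next
    case False
    have sy: "sorted_wrt (<) ys" using "4.prems" by simp
    have IH: "es (mrg (x#xs) ys) = (if length (x#xs) = length ys then lz (cs (x#xs) ys)
       else upd (lz (cs (x#xs) ys)) (length ys < length (x#xs)))"
      using "4.IH"(2)[OF False "4.prems"(1) sy] .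
    have mn: "\<forall>v\<in>set (x#xs). y < v" using False "4.prems"(1) by auto
    have csq: "cs (x#xs) (y#ys) = cs (x#xs) ys @ (if length ys < length (x#xs) then [True] else [])"
      using cs_consY[OF mn] .
    have e: "es (mrg (x#xs) (y#ys)) = (if length (x#xs) = length ys then upd (es (mrg (x#xs) ys)) False else es (mrg (x#xs) ys))"
      using False by (simp add: es.simps)
    show ?thesis
      unfolding e IH csq by (auto simp: lz_snoc upd_idem)
  qed
qed

lemma lz_char: "s \<noteq> [] \<Longrightarrow> lz s = (length (remdups_adj s), last s)"
proof (induction s rule: rev_induct)
  case Nil then show ?case by simp
next
  case (snoc t s)
  show ?case
  proof (cases "s = []")
    case True then show ?thesis by (simp add: lz_def upd_def)
  next
    case False
    have r: "remdups_adj (s @ [t]) = remdups_adj s @ (if t = last s then [] else [t])"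
      using remdups_adj_append''[OF False, of "[t]"] by simp
    have L: "1 \<le> length (remdups_adj s)" using False by simp
    have I: "lz s = (length (remdups_adj s), last s)" using snoc.IH[OF False] .
    show ?thesis
    proof (cases "t = last s")
      case True
      then show ?thesis using L I r False by (simp add: lz_snoc upd_def)
    next
      case F: False
      then have "last s \<noteq> t" by auto
      then show ?thesis using L I r F False by (simp add: lz_snoc upd_def)
    qed
  qed
qed

definition Prs :: "bool list \<Rightarrow> (nat list \<times> nat list) set" where
  "Prs r = {p. sorted_wrt (<) (fst p) \<and> sorted_wrt (<) (snd p) \<and> mrg (fst p) (snd p) = r}"

definition wt :: "nat list \<times> nat list \<Rightarrow> nat" where "wt p = sum_list (fst p) + sum_list (snd p)"

definition elems :: "nat list \<times> nat list \<Rightarrow> nat set" where "elems p = set (fst p) \<union> set (snd p)"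

definition shl :: "nat \<Rightarrow> nat list \<times> nat list \<Rightarrow> nat list \<times> nat list" where
  "shl s p = (map (\<lambda>v. v + s) (fst p), map (\<lambda>v. v + s) (snd p))"

definition sa :: "bool \<Rightarrow> bool list \<Rightarrow> nat" where
  "sa c r = (if r = [] then 0 else if c \<and> \<not> hd r then 0 else 1)"

lemma wstat_sa: "wstat (c # r) = wstat r + sa c r * length r"
  by (simp add: wstat.simps sa_def)

lemma mrg_map:
  "(\<forall>u\<in>set xs \<union> set ys. \<forall>v\<in>set xs \<union> set ys. (f u \<le> f v) = (u \<le> v)) \<Longrightarrow> mrg (map f xs) (map f ys) = mrg xs ys"
  by (induction xs ys rule: mrg.induct) auto

lemma mrg_True: "mrg xs ys = True # r \<Longrightarrow> \<exists>x xs'. xs = x # xs' \<and> (ys = [] \<or> x \<le> hd ys) \<and> mrg xs' ys = r"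
  by (induction xs ys rule: mrg.induct) (auto split: if_splits)

lemma mrg_False: "mrg xs ys = False # r \<Longrightarrow> \<exists>y ys'. ys = y # ys' \<and> (xs = [] \<or> y < hd xs) \<and> mrg xs ys' = r"
  by (induction xs ys rule: mrg.induct) (auto split: if_splits)

lemma mrg_Nil: "mrg xs ys = [] \<Longrightarrow> xs = [] \<and> ys = []"
  by (induction xs ys rule: mrg.induct) (auto split: if_splits)

lemma sum_list_shift: "sum_list (map (\<lambda>v. v + s) xs) = sum_list xs + s * length xs"
  by (induction xs) auto

lemma sorted_shift: "sorted_wrt (<) xs \<Longrightarrow> sorted_wrt (<) (map (\<lambda>v. v + (s::nat)) xs)"
  by (simp add: sorted_wrt_map)

lemma sorted_unshift: "sorted_wrt (<) xs \<Longrightarrow> \<forall>v\<in>set xs. s \<le> v \<Longrightarrow> sorted_wrt (<) (map (\<lambda>v. v - (s::nat)) xs)"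
  by (induction xs) (auto simp: sorted_wrt_map)

lemma map_unshift: "\<forall>v\<in>set xs. s \<le> v \<Longrightarrow> map (\<lambda>v. v + (s::nat)) (map (\<lambda>v. v - s) xs) = xs"
  by (induction xs) auto

lemma shift_image:
  "{p \<in> Prs r. wt p = N \<and> (\<forall>v\<in>elems p. s \<le> v)} = shl s ` {q \<in> Prs r. wt q + s * length r = N}"
proof
  show "shl s ` {q \<in> Prs r. wt q + s * length r = N} \<subseteq> {p \<in> Prs r. wt p = N \<and> (\<forall>v\<in>elems p. s \<le> v)}"
  proof
    fix p assume "p \<in> shl s ` {q \<in> Prs r. wt q + s * length r = N}"
    then obtain xs ys where q: "(xs, ys) \<in> Prs r" "wt (xs, ys) + s * length r = N" and p: "p = shl s (xs, ys)"
      by auto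
    have m: "mrg (map (\<lambda>v. v + s) xs) (map (\<lambda>v. v + s) ys) = mrg xs ys" by (rule mrg_map) auto
    have len: "length r = length xs + length ys" using q(1) unfolding Prs_def by auto
    show "p \<in> {p \<in> Prs r. wt p = N \<and> (\<forall>v\<in>elems p. s \<le> v)}"
      using q m len unfolding p Prs_def shl_def wt_def elems_def
      by (auto simp: sorted_shift sum_list_shift algebra_simps)
  qed
next
  show "{p \<in> Prs r. wt p = N \<and> (\<forall>v\<in>elems p. s \<le> v)} \<subseteq> shl s ` {q \<in> Prs r. wt q + s * length r = N}"
  proof
    fix p assume p: "p \<in> {p \<in> Prs r. wt p = N \<and> (\<forall>v\<in>elems p. s \<le> v)}"
    obtain xs ys where pe: "p = (xs, ys)" by fastforce
    have sx: "\<forall>v\<in>set xs. s \<le> v" and sy: "\<forall>v\<in>set ys. s \<le> v" using p pe by (auto simp: elems_def)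
    have P: "sorted_wrt (<) xs" "sorted_wrt (<) ys" "mrg xs ys = r" "sum_list xs + sum_list ys = N"
      using p pe by (auto simp: Prs_def wt_def)
    let ?q = "(map (\<lambda>v. v - s) xs, map (\<lambda>v. v - s) ys)"
    have m: "mrg (map (\<lambda>v. v - s) xs) (map (\<lambda>v. v - s) ys) = mrg xs ys"
      by (rule mrg_map) (use sx sy in auto)
    have len: "length r = length xs + length ys" using P(3) by auto
    have e1: "shl s ?q = p" using pe map_unshift[OF sx] map_unshift[OF sy] by (simp add: shl_def)
    have e2: "sum_list (map (\<lambda>v. v - s) xs) + s * length xs = sum_list xs"
      using sum_list_shift[of s "map (\<lambda>v. v - s) xs"] map_unshift[OF sx] by simp
    have e3: "sum_list (map (\<lambda>v. v - s) ys) + s * length ys = sum_list ys"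
      using sum_list_shift[of s "map (\<lambda>v. v - s) ys"] map_unshift[OF sy] by simp
    have "?q \<in> {q \<in> Prs r. wt q + s * length r = N}"
      using P m len e2 e3 sorted_unshift[OF P(1) sx] sorted_unshift[OF P(2) sy]
      by (simp add: Prs_def wt_def algebra_simps)
    then show "p \<in> shl s ` {q \<in> Prs r. wt q + s * length r = N}" using e1 by force
  qed
qed

lemma inj_shl: "inj (shl s)"
  by (rule injI) (auto simp: shl_def prod_eq_iff)


lemma Z_True:
  "{p \<in> Prs (True # r). wt p = N \<and> 0 \<in> elems p} = (\<lambda>q. (0 # fst q, snd q)) ` {q \<in> Prs r. wt q = N \<and> (\<forall>v\<in>elems q. sa True r \<le> v)}"
proof
  show "(\<lambda>q. (0 # fst q, snd q)) ` {q \<in> Prs r. wt q = N \<and> (\<forall>v\<in>elems q. sa True r \<le> v)} \<subseteq> {p \<in> Prs (True # r). wt p = N \<and> 0 \<in> elems p}"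
  proof
    fix p assume "p \<in> (\<lambda>q. (0 # fst q, snd q)) ` {q \<in> Prs r. wt q = N \<and> (\<forall>v\<in>elems q. sa True r \<le> v)}"
    then obtain xs ys where q: "sorted_wrt (<) xs" "sorted_wrt (<) ys" "mrg xs ys = r" "wt (xs, ys) = N"
      "\<forall>v\<in>set xs \<union> set ys. sa True r \<le> v" and p: "p = (0 # xs, ys)"
      by (auto simp: Prs_def elems_def)
    have pos: "\<forall>v\<in>set xs. 0 < v"
    proof (cases "sa True r = 1")
      case True then show ?thesis using q(5) by auto
    next
      case False
      show ?thesis
      proof (cases xs)
        case Nil then show ?thesis by simp
      next
        case (Cons x xs')
        have rne: "r \<noteq> []"
        proof
          assume "r = []"
          then have "xs = []" using q(3) mrg_Nil by blast
          then show False using Cons by simp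
        qed
        then have "\<not> hd r" using False by (auto simp: sa_def split: if_splits)
        then obtain r' where "r = False # r'" using rne by (cases r) auto
        then obtain y ys' where "ys = y # ys'" "y < x" using mrg_False q(3) Cons by fastforce
        then show ?thesis using q(1) Cons by auto
      qed
    qed
    have "mrg (0 # xs) ys = True # mrg xs ys" by (cases ys) auto
    then show "p \<in> {p \<in> Prs (True # r). wt p = N \<and> 0 \<in> elems p}"
      using q pos p by (auto simp: Prs_def wt_def elems_def)
  qed
next
  show "{p \<in> Prs (True # r). wt p = N \<and> 0 \<in> elems p} \<subseteq> (\<lambda>q. (0 # fst q, snd q)) ` {q \<in> Prs r. wt q = N \<and> (\<forall>v\<in>elems q. sa True r \<le> v)}"
  proof
    fix p assume p: "p \<in> {p \<in> Prs (True # r). wt p = N \<and> 0 \<in> elems p}"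
    obtain xs ys where pe: "p = (xs, ys)" by fastforce
    have P: "sorted_wrt (<) xs" "sorted_wrt (<) ys" "mrg xs ys = True # r" "wt (xs, ys) = N" "0 \<in> set xs \<union> set ys"
      using p pe by (auto simp: Prs_def elems_def)
    obtain x xs' where xs: "xs = x # xs'" and hy: "ys = [] \<or> x \<le> hd ys" and m: "mrg xs' ys = r"
      using mrg_True[OF P(3)] by blast
    have minx: "\<forall>v\<in>set xs \<union> set ys. x \<le> v"
    proof
      fix v assume v: "v \<in> set xs \<union> set ys"
      show "x \<le> v"
      proof (cases "v \<in> set xs")
        case True then show ?thesis using P(1) xs by auto
      next
        case False
        then have vy: "v \<in> set ys" using v by auto
        then obtain y ys' where ye: "ys = y # ys'" by (cases ys) auto
        then have "y \<le> v" using P(2) vy by auto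
        then show ?thesis using hy ye by auto
      qed
    qed
    have "x \<le> 0" using minx P(5) by blast
    then have x0: "x = 0" by simp
    have ge: "\<forall>v\<in>set xs' \<union> set ys. sa True r \<le> v"
    proof (cases "sa True r = 1")
      case True
      then have rne: "r \<noteq> []" and hr: "hd r" by (auto simp: sa_def split: if_splits)
      then obtain r' where "r = True # r'" by (cases r) auto
      then obtain x1 xs'' where xs': "xs' = x1 # xs''" and h2: "ys = [] \<or> x1 \<le> hd ys"
        using mrg_True m by blast
      have h0: "0 < x1" using P(1) xs xs' x0 by auto
      have hall: "\<forall>v\<in>set xs' \<union> set ys. x1 \<le> v"
      proof
        fix v assume v: "v \<in> set xs' \<union> set ys"
        show "x1 \<le> v"
        proof (cases "v \<in> set xs'")
          case True then show ?thesis using P(1) xs xs' by auto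
        next
          case False
          then have vy: "v \<in> set ys" using v by auto
          then obtain y ys' where ye: "ys = y # ys'" by (cases ys) auto
          then have "y \<le> v" using P(2) vy by auto
          then show ?thesis using h2 ye by auto
        qed
      qed
      have "\<forall>v\<in>set xs' \<union> set ys. 1 \<le> v"
      proof (intro ballI)
        fix v assume "v \<in> set xs' \<union> set ys"
        then have "x1 \<le> v" using hall by blast
        then show "1 \<le> v" using h0 by linarith
      qed
      then show ?thesis using True by simp
    next
      case False
      then have "sa True r = 0" by (simp add: sa_def split: if_splits)
      then show ?thesis by simp
    qed
    have "(xs', ys) \<in> {q \<in> Prs r. wt q = N \<and> (\<forall>v\<in>elems q. sa True r \<le> v)}"
      using P xs x0 m ge by (auto simp: Prs_def wt_def elems_def)
    moreover have "p = (0 # fst (xs', ys), snd (xs', ys))" using pe xs x0 by simp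
    ultimately show "p \<in> (\<lambda>q. (0 # fst q, snd q)) ` {q \<in> Prs r. wt q = N \<and> (\<forall>v\<in>elems q. sa True r \<le> v)}"
      by blast
  qed
qed

lemma Z_False:
  "{p \<in> Prs (False # r). wt p = N \<and> 0 \<in> elems p} = (\<lambda>q. (fst q, 0 # snd q)) ` {q \<in> Prs r. wt q = N \<and> (\<forall>v\<in>elems q. sa False r \<le> v)}"
proof
  show "(\<lambda>q. (fst q, 0 # snd q)) ` {q \<in> Prs r. wt q = N \<and> (\<forall>v\<in>elems q. sa False r \<le> v)} \<subseteq> {p \<in> Prs (False # r). wt p = N \<and> 0 \<in> elems p}"
  proof
    fix p assume "p \<in> (\<lambda>q. (fst q, 0 # snd q)) ` {q \<in> Prs r. wt q = N \<and> (\<forall>v\<in>elems q. sa False r \<le> v)}"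
    then obtain xs ys where q: "sorted_wrt (<) xs" "sorted_wrt (<) ys" "mrg xs ys = r" "wt (xs, ys) = N"
      "\<forall>v\<in>set xs \<union> set ys. sa False r \<le> v" and p: "p = (xs, 0 # ys)"
      by (auto simp: Prs_def elems_def)
    have pos: "\<forall>v\<in>set xs \<union> set ys. 0 < v"
    proof (cases "r = []")
      case True
      then have "xs = [] \<and> ys = []" using q(3) mrg_Nil by blast
      then show ?thesis by simp
    next
      case False then have "sa False r = 1" by (simp add: sa_def)
      then show ?thesis using q(5) by auto
    qed
    have "mrg xs (0 # ys) = False # mrg xs ys"
      using pos by (cases xs) auto
    then show "p \<in> {p \<in> Prs (False # r). wt p = N \<and> 0 \<in> elems p}"
      using q pos p by (auto simp: Prs_def wt_def elems_def)
  qed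
next
  show "{p \<in> Prs (False # r). wt p = N \<and> 0 \<in> elems p} \<subseteq> (\<lambda>q. (fst q, 0 # snd q)) ` {q \<in> Prs r. wt q = N \<and> (\<forall>v\<in>elems q. sa False r \<le> v)}"
  proof
    fix p assume p: "p \<in> {p \<in> Prs (False # r). wt p = N \<and> 0 \<in> elems p}"
    obtain xs ys where pe: "p = (xs, ys)" by fastforce
    have P: "sorted_wrt (<) xs" "sorted_wrt (<) ys" "mrg xs ys = False # r" "wt (xs, ys) = N" "0 \<in> set xs \<union> set ys"
      using p pe by (auto simp: Prs_def elems_def)
    obtain y ys' where ys: "ys = y # ys'" and hx: "xs = [] \<or> y < hd xs" and m: "mrg xs ys' = r"
      using mrg_False[OF P(3)] by blast
    have gt: "\<forall>v\<in>set xs \<union> set ys'. y < v"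
    proof
      fix v assume v: "v \<in> set xs \<union> set ys'"
      show "y < v"
      proof (cases "v \<in> set ys'")
        case True then show ?thesis using P(2) ys by auto
      next
        case False
        then have vx: "v \<in> set xs" using v by auto
        then obtain x xs' where xe: "xs = x # xs'" by (cases xs) auto
        then have "x \<le> v" using P(1) vx by auto
        then show ?thesis using hx xe by auto
      qed
    qed
    have "0 \<in> set xs \<union> set ys' \<or> y = 0" using P(5) ys by auto
    then have y0: "y = 0" using gt by blast
    have "\<forall>v\<in>set xs \<union> set ys'. 1 \<le> v"
    proof (intro ballI)
      fix v assume "v \<in> set xs \<union> set ys'"
      then have "y < v" using gt by blast
      then show "1 \<le> v" using y0 by linarith
    qed
    then have ge: "\<forall>v\<in>set xs \<union> set ys'. sa False r \<le> v"
      by (auto simp: sa_def)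
    have "(xs, ys') \<in> {q \<in> Prs r. wt q = N \<and> (\<forall>v\<in>elems q. sa False r \<le> v)}"
      using P ys y0 m ge by (auto simp: Prs_def wt_def elems_def)
    moreover have "p = (fst (xs, ys'), 0 # snd (xs, ys'))" using pe ys y0 by simp
    ultimately show "p \<in> (\<lambda>q. (fst q, 0 # snd q)) ` {q \<in> Prs r. wt q = N \<and> (\<forall>v\<in>elems q. sa False r \<le> v)}"
      by blast
  qed
qed

definition cnt :: "bool list \<Rightarrow> nat \<Rightarrow> nat" where "cnt r N = card {p \<in> Prs r. wt p = N}"

lemma fin_Prs: "finite {p \<in> Prs r. wt p = N}"
proof -
  let ?L = "{xs. set xs \<subseteq> {..N} \<and> length xs \<le> length r}"
  have "{p \<in> Prs r. wt p = N} \<subseteq> ?L \<times> ?L"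
  proof
    fix p assume p: "p \<in> {p \<in> Prs r. wt p = N}"
    obtain xs ys where pe: "p = (xs, ys)" by fastforce
    have m: "mrg xs ys = r" and w: "sum_list xs + sum_list ys = N" using p pe by (auto simp: Prs_def wt_def)
    have "length xs \<le> length r" "length ys \<le> length r" using m by auto
    moreover have "set xs \<subseteq> {..N}" using w member_le_sum_list[of _ xs] by fastforce
    moreover have "set ys \<subseteq> {..N}" using w member_le_sum_list[of _ ys] by fastforce
    ultimately show "p \<in> ?L \<times> ?L" using pe by auto
  qed
  moreover have "finite (?L \<times> ?L)" using finite_lists_length_le[of "{..N}"] by simp
  ultimately show ?thesis by (rule finite_subset)
qed

lemma card_shift: "card {q \<in> Prs r. wt q + k = N} = (if k \<le> N then cnt r (N - k) else 0)"
proof (cases "k \<le> N")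
  case True
  then have "{q \<in> Prs r. wt q + k = N} = {q \<in> Prs r. wt q = N - k}" by auto
  then show ?thesis using True by (simp add: cnt_def)
next
  case False
  then have "{q \<in> Prs r. wt q + k = N} = {}" by auto
  then show ?thesis using False by simp
qed

lemma inj_z1: "inj (\<lambda>q::nat list \<times> nat list. (0 # fst q, snd q))"
  by (rule injI) (auto simp: prod_eq_iff)
lemma inj_z2: "inj (\<lambda>q::nat list \<times> nat list. (fst q, 0 # snd q))"
  by (rule injI) (auto simp: prod_eq_iff)

lemma cnt_rec:
  "cnt (c # r) N = card {q \<in> Prs (c # r). wt q + Suc (length r) = N} + card {q \<in> Prs r. wt q + sa c r * length r = N}"
proof -
  let ?A = "{p \<in> Prs (c # r). wt p = N \<and> (\<forall>v\<in>elems p. 1 \<le> v)}"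
  let ?B = "{p \<in> Prs (c # r). wt p = N \<and> 0 \<in> elems p}"
  have U: "{p \<in> Prs (c # r). wt p = N} = ?A \<union> ?B" by (fastforce simp: Suc_le_eq intro: gr0I)
  have D: "?A \<inter> ?B = {}" by auto
  have fA: "finite ?A" by (rule finite_subset[OF _ fin_Prs[of "c # r" N]]) auto
  have fB: "finite ?B" by (rule finite_subset[OF _ fin_Prs[of "c # r" N]]) auto
  have cA: "card ?A = card {q \<in> Prs (c # r). wt q + Suc (length r) = N}"
    using shift_image[of "c # r" N 1] inj_shl[of 1] by (simp add: card_image inj_on_def)
  have cB: "card ?B = card {q \<in> Prs r. wt q + sa c r * length r = N}"
  proof -
    let ?C = "{q \<in> Prs r. wt q = N \<and> (\<forall>v\<in>elems q. sa c r \<le> v)}"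
    have "card ?B = card ?C"
    proof (cases c)
      case True
      then show ?thesis using Z_True[of r N] inj_z1 card_image[of "\<lambda>q. (0 # fst q, snd q)" ?C]
        by (simp add: inj_on_def)
    next
      case False
      then show ?thesis using Z_False[of r N] inj_z2 card_image[of "\<lambda>q. (fst q, 0 # snd q)" ?C]
        by (simp add: inj_on_def)
    qed
    also have "\<dots> = card {q \<in> Prs r. wt q + sa c r * length r = N}"
      using shift_image[of r N "sa c r"] inj_shl[of "sa c r"] by (simp add: card_image inj_on_def)
    finally show ?thesis .
  qed
  show ?thesis unfolding cnt_def U using card_Un_disjoint[OF fA fB D] cA cB by simp
qed

definition gfr :: "bool list \<Rightarrow> rat fps" where "gfr r = Abs_fps (\<lambda>N. of_nat (cnt r N))"

lemma gfr_rec: "gfr (c # r) = fps_X ^ Suc (length r) * gfr (c # r) + fps_X ^ (sa c r * length r) * gfr r"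
proof (rule fps_ext)
  fix N
  show "fps_nth (gfr (c # r)) N = fps_nth (fps_X ^ Suc (length r) * gfr (c # r) + fps_X ^ (sa c r * length r) * gfr r) N"
  proof -
    have e1: "card {q \<in> Prs (c # r). wt q + Suc (length r) = N} = (if Suc (length r) \<le> N then cnt (c # r) (N - Suc (length r)) else 0)"
      by (rule card_shift)
    have e2: "card {q \<in> Prs r. wt q + sa c r * length r = N} = (if sa c r * length r \<le> N then cnt r (N - sa c r * length r) else 0)"
      by (rule card_shift)
    have ce: "cnt (c # r) N = (if Suc (length r) \<le> N then cnt (c # r) (N - Suc (length r)) else 0)
       + (if sa c r * length r \<le> N then cnt r (N - sa c r * length r) else 0)"
      using cnt_rec[of c r N] unfolding e1 e2 .
    show ?thesis unfolding gfr_def fps_add_nth fps_X_power_mult_nth fps_nth_Abs_fps ce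
      by (simp add: not_less)
  qed
qed

lemma Prs_Nil: "Prs [] = {([], [])}"
  by (auto simp: Prs_def dest: mrg_Nil)

lemma gfr_closed: "gfr r * qpoch fps_X (length r) = fps_X ^ wstat r"
proof (induction r)
  case Nil
  have "gfr [] = 1"
  proof (rule fps_ext)
    fix N
    have "{p \<in> Prs []. wt p = N} = (if N = 0 then {([], [])} else {})"
      by (auto simp: Prs_Nil wt_def)
    then show "fps_nth (gfr []) N = fps_nth 1 N" by (simp add: gfr_def cnt_def)
  qed
  then show ?case by simp
next
  case (Cons c r)
  let ?G = "gfr (c # r)" and ?L = "length r"
  have eq: "?G = fps_X ^ Suc ?L * ?G + fps_X ^ (sa c r * ?L) * gfr r" by (rule gfr_rec)
  have "?G - fps_X ^ Suc ?L * ?G = (fps_X ^ Suc ?L * ?G + fps_X ^ (sa c r * ?L) * gfr r) - fps_X ^ Suc ?L * ?G"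
    using eq by (rule arg_cong[where f="\<lambda>t. t - fps_X ^ Suc ?L * ?G"])
  then have g1: "?G * (1 - fps_X ^ Suc ?L) = fps_X ^ (sa c r * ?L) * gfr r"
    by (simp add: algebra_simps)
  have "?G * qpoch fps_X (length (c # r)) = (?G * (1 - fps_X ^ Suc ?L)) * qpoch fps_X ?L"
    by (simp add: qpoch_Suc mult_ac)
  also have "\<dots> = fps_X ^ (sa c r * ?L) * (gfr r * qpoch fps_X ?L)"
    unfolding g1 by (simp add: mult.assoc)
  also have "\<dots> = fps_X ^ wstat (c # r)" using Cons.IH by (simp add: wstat_sa power_add mult.commute)
  finally show ?case .
qed

lemma tri_eq: "tri n + tri n + n = n * n"
  by (induction n) (auto simp: algebra_simps)

lemma tri_choose: "tri n = n choose 2"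
proof -
  have "2 * tri n = n * (n - 1)" using tri_eq[of n] by (cases n) (auto simp: algebra_simps)
  then show ?thesis by (simp add: choose_two)
qed

lemma card_bij_filter:
  assumes "bij_betw f A B"
  shows "card {a \<in> A. Q (f a)} = card {b \<in> B. Q b}"
proof -
  have "bij_betw f {a \<in> A. Q (f a)} {b \<in> B. Q b}"
    using assms unfolding bij_betw_def inj_on_def by auto
  then show ?thesis by (rule bij_betw_same_card)
qed

lemma col_signs_cs: "l \<in> AA n d \<Longrightarrow> col_signs l = cs (fst (FF d l)) (snd (FF d l))"
  unfolding AA_def FF_def cs_def col_signs_def col_positive_def
  by (auto simp: rev_map)

lemma es_FF:
  assumes l: "l \<in> AA n d" and d1: "1 \<le> d"
  shows "es (mrg (fst (FF d l)) (snd (FF d l))) = (num_blocks l, last_block_positive l)"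
proof -
  have B: "FF d l \<in> BB n d" using FF_in[OF l] .
  then have h: "sorted_wrt (<) (fst (FF d l))" "sorted_wrt (<) (snd (FF d l))"
    "length (fst (FF d l)) = d" "length (snd (FF d l)) = d" by (auto simp: BB_def)
  have ne: "col_signs l \<noteq> []" using l d1 by (auto simp: col_signs_def AA_def)
  show ?thesis using es_mrg[OF h(1,2)] h(3,4) col_signs_cs[OF l] lz_char[OF ne]
    by (simp add: num_blocks_def last_block_positive_def)
qed


definition RR :: "nat \<Rightarrow> nat \<times> bool \<Rightarrow> bool list set" where
  "RR d e = {r \<in> W (d + d). nX r = d \<and> es r = e}"

lemma RR_finite: "finite (RR d e)"
  unfolding RR_def using W_finite by simp

lemma BB_union: "d \<le> n \<Longrightarrow> {p \<in> BB n d. es (mrg (fst p) (snd p)) = e} = (\<Union>r\<in>RR d e. {p \<in> Prs r. wt p = n - d})"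
proof (rule set_eqI, rule iffI)
  fix p assume dn: "d \<le> n" and p: "p \<in> {p \<in> BB n d. es (mrg (fst p) (snd p)) = e}"
  let ?r = "mrg (fst p) (snd p)"
  have "?r \<in> RR d e" using p by (auto simp: BB_def RR_def W_def)
  moreover have "p \<in> {p \<in> Prs ?r. wt p = n - d}" using p by (auto simp: BB_def Prs_def wt_def)
  ultimately show "p \<in> (\<Union>r\<in>RR d e. {p \<in> Prs r. wt p = n - d})" by blast
next
  fix p assume dn: "d \<le> n" and p: "p \<in> (\<Union>r\<in>RR d e. {p \<in> Prs r. wt p = n - d})"
  then obtain r where r: "r \<in> RR d e" and pr: "p \<in> Prs r" and w: "wt p = n - d" by blast
  have m: "mrg (fst p) (snd p) = r" using pr by (simp add: Prs_def)
  have "length (fst p) = d" using r m by (auto simp: RR_def)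
  moreover have "length (snd p) = d"
    using r m len_nY[of r d d] by (auto simp: RR_def)
  ultimately show "p \<in> {p \<in> BB n d. es (mrg (fst p) (snd p)) = e}"
    using pr w dn m r by (auto simp: BB_def Prs_def wt_def RR_def)
qed

lemma BB_small: "n < d \<Longrightarrow> BB n d = {}"
  by (auto simp: BB_def)

lemma card_E: "card {p \<in> BB n d. es (mrg (fst p) (snd p)) = e} = (if d \<le> n then (\<Sum>r\<in>RR d e. cnt r (n - d)) else 0)"
proof (cases "d \<le> n")
  case True
  have "card (\<Union>r\<in>RR d e. {p \<in> Prs r. wt p = n - d}) = (\<Sum>r\<in>RR d e. card {p \<in> Prs r. wt p = n - d})"
  proof (rule card_UN_disjoint)
    show "finite (RR d e)" by (rule RR_finite)
    show "\<forall>r\<in>RR d e. finite {p \<in> Prs r. wt p = n - d}" using fin_Prs by blast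
    show "\<forall>r\<in>RR d e. \<forall>r'\<in>RR d e. r \<noteq> r' \<longrightarrow> {p \<in> Prs r. wt p = n - d} \<inter> {p \<in> Prs r'. wt p = n - d} = {}"
      by (auto simp: Prs_def)
  qed
  then show ?thesis using True BB_union[OF True] by (simp add: cnt_def)
next
  case False
  then show ?thesis using BB_small by simp
qed

lemma fps_E:
  assumes d1: "1 \<le> d"
  shows "Abs_fps (\<lambda>n. if n = 0 then 0 else of_nat (card {p \<in> BB n d. es (mrg (fst p) (snd p)) = e}) :: rat)
     = fps_X ^ d * (\<Sum>r\<in>RR d e. gfr r)"
proof (rule fps_ext)
  fix n
  show "fps_nth (Abs_fps (\<lambda>n. if n = 0 then 0 else of_nat (card {p \<in> BB n d. es (mrg (fst p) (snd p)) = e}) :: rat)) n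
     = fps_nth (fps_X ^ d * (\<Sum>r\<in>RR d e. gfr r)) n"
    unfolding fps_X_power_mult_nth fps_sum_nth card_E using d1
    by (auto simp: gfr_def not_less)
qed

lemma a_plus_E: "1 \<le> d \<Longrightarrow> a_plus m n d = card {p \<in> BB n d. es (mrg (fst p) (snd p)) = (m, True)}"
proof -
  assume d1: "1 \<le> d"
  have "a_plus m n d = card {l \<in> AA n d. es (mrg (fst (FF d l)) (snd (FF d l))) = (m, True)}"
    unfolding a_plus_def
  proof (rule arg_cong[where f=card], rule set_eqI)
    fix l
    show "l \<in> {l \<in> partitions n. frob_d l = d \<and> num_blocks l = m \<and> last_block_positive l} \<longleftrightarrow>
          l \<in> {l \<in> AA n d. es (mrg (fst (FF d l)) (snd (FF d l))) = (m, True)}"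
    proof (cases "l \<in> AA n d")
      case True
      then show ?thesis using es_FF[OF True d1] by (auto simp: AA_def)
    next
      case False
      then show ?thesis by (auto simp: AA_def)
    qed
  qed
  also have "\<dots> = card {p \<in> BB n d. es (mrg (fst p) (snd p)) = (m, True)}"
    by (rule card_bij_filter[OF FF_bij[OF d1]])
  finally show ?thesis .
qed

lemma a_minus_E: "1 \<le> d \<Longrightarrow> a_minus m n d = card {p \<in> BB n d. es (mrg (fst p) (snd p)) = (m, False)}"
proof -
  assume d1: "1 \<le> d"
  have "a_minus m n d = card {l \<in> AA n d. es (mrg (fst (FF d l)) (snd (FF d l))) = (m, False)}"
    unfolding a_minus_def
  proof (rule arg_cong[where f=card], rule set_eqI)
    fix l
    show "l \<in> {l \<in> partitions n. frob_d l = d \<and> num_blocks l = m \<and> \<not> last_block_positive l} \<longleftrightarrow>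
          l \<in> {l \<in> AA n d. es (mrg (fst (FF d l)) (snd (FF d l))) = (m, False)}"
    proof (cases "l \<in> AA n d")
      case True
      then show ?thesis using es_FF[OF True d1] by (auto simp: AA_def)
    next
      case False
      then show ?thesis by (auto simp: AA_def)
    qed
  qed
  also have "\<dots> = card {p \<in> BB n d. es (mrg (fst p) (snd p)) = (m, False)}"
    by (rule card_bij_filter[OF FF_bij[OF d1]])
  finally show ?thesis .
qed


lemma one_minus_X_nz: "1 \<le> j \<Longrightarrow> (1 - fps_X ^ j :: rat fps) \<noteq> 0"
proof
  assume j: "1 \<le> j" and "(1 - fps_X ^ j :: rat fps) = 0"
  then have "fps_nth (1 - fps_X ^ j :: rat fps) 0 = 0" by simp
  then show False using j by simp
qed

lemma key_identity:
  assumes m1: "1 \<le> m" and md: "m \<le> d"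
  shows "(1 - fps_X ^ d) * (qb (d + d - 1) (d + m - 1) - fps_X ^ m * qb (d + d - 1) (d + m))
       = (1 - fps_X ^ m) * qb (2 * d) (d + m)"
proof -
  let ?N = "d + d - 1" and ?k = "d + m - 1"
  let ?B = "qb ?N ?k" and ?B' = "qb ?N (d + m)" and ?C = "qb (2 * d) (d + m)"
  have kN: "?k \<le> ?N" using md by simp
  have A: "(1 - fps_X ^ (d + m)) * ?C = (1 - fps_X ^ d * fps_X ^ d) * ?B"
  proof -
    have "(1 - fps_X ^ Suc ?k) * qb (Suc ?N) (Suc ?k) = (1 - fps_X ^ Suc ?N) * qb ?N ?k"
      by (rule qb_ratio1[OF kN])
    moreover have "Suc ?k = d + m" "Suc ?N = 2 * d" using m1 md by auto
    ultimately show ?thesis by (simp add: power_add[symmetric] mult_2)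
  qed
  have B: "(1 - fps_X ^ (d + m)) * ?B' = (1 - fps_X ^ (d - m)) * ?B"
  proof (cases "m = d")
    case True
    then have "?N < d + m" using m1 by simp
    then show ?thesis using True by (simp add: qb_gt)
  next
    case False
    then have mlt: "m < d" using md by simp
    obtain N' where N': "?N = Suc N'" using m1 md by (cases "d + d - 1") auto
    have kN': "?k \<le> N'" using N' mlt by simp
    have e1: "(1 - fps_X ^ Suc ?k) * qb (Suc N') (Suc ?k) = (1 - fps_X ^ Suc N') * qb N' ?k"
      by (rule qb_ratio1[OF kN'])
    have e2: "(1 - fps_X ^ (Suc N' - ?k)) * qb (Suc N') ?k = (1 - fps_X ^ Suc N') * qb N' ?k"
      by (rule qb_ratio2[OF kN'])
    have "Suc ?k = d + m" "Suc N' - ?k = d - m" using N' m1 md by auto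
    then show ?thesis using e1 e2 N' by simp
  qed
  have xm: "(fps_X::rat fps) ^ m * fps_X ^ (d - m) = fps_X ^ d"
    using md by (simp add: power_add[symmetric])
  have xdm: "(fps_X::rat fps) ^ (d + m) = fps_X ^ d * fps_X ^ m" by (simp add: power_add)
  have "(1 - fps_X ^ (d + m)) * ((1 - fps_X ^ d) * (?B - fps_X ^ m * ?B'))
      = (1 - fps_X ^ d) * ((1 - fps_X ^ (d + m)) * ?B - fps_X ^ m * ((1 - fps_X ^ (d + m)) * ?B'))"
    by (simp add: algebra_simps)
  also have "\<dots> = (1 - fps_X ^ d) * ((1 - fps_X ^ (d + m)) * ?B - (fps_X ^ m - fps_X ^ m * fps_X ^ (d - m)) * ?B)"
    unfolding B by (simp add: algebra_simps)
  also have "\<dots> = (1 - fps_X ^ m) * ((1 - fps_X ^ d * fps_X ^ d) * ?B)"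
    unfolding xm xdm by (simp add: algebra_simps)
  also have "\<dots> = (1 - fps_X ^ m) * ((1 - fps_X ^ (d + m)) * ?C)" using A by simp
  also have "\<dots> = (1 - fps_X ^ (d + m)) * ((1 - fps_X ^ m) * ?C)" by (simp add: algebra_simps)
  finally have "(1 - fps_X ^ (d + m)) * ((1 - fps_X ^ d) * (?B - fps_X ^ m * ?B'))
      = (1 - fps_X ^ (d + m)) * ((1 - fps_X ^ m) * ?C)" .
  moreover have "(1 - fps_X ^ (d + m) :: rat fps) \<noteq> 0" using m1 by (intro one_minus_X_nz) simp
  ultimately show ?thesis by simp
qed


lemma qpoch_unit: "qpoch (fps_X::rat fps) n * inverse (qpoch fps_X n) = 1"
  by (rule inverse_mult_eq_1') (simp add: qpoch_nth0)

lemma gfr_inv: "gfr r = fps_X ^ wstat r * inverse (qpoch fps_X (length r))"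
proof -
  have "gfr r = gfr r * (qpoch fps_X (length r) * inverse (qpoch fps_X (length r)))"
    by (simp add: qpoch_unit)
  also have "\<dots> = fps_X ^ wstat r * inverse (qpoch fps_X (length r))"
    using gfr_closed[of r] by (simp add: mult.assoc[symmetric])
  finally show ?thesis .
qed

lemma sumRR: "(\<Sum>r\<in>RR d e. gfr r) = (\<Sum>r\<in>RR d e. fps_X ^ wstat r) * inverse (qpoch fps_X (2 * d))"
proof -
  have "(\<Sum>r\<in>RR d e. gfr r) = (\<Sum>r\<in>RR d e. fps_X ^ wstat r * inverse (qpoch fps_X (2 * d)))"
    by (rule sum.cong) (auto simp: gfr_inv RR_def W_def mult_2)
  then show ?thesis by (simp add: sum_distrib_right)
qed

lemma sumRR_W: "(\<Sum>r\<in>RR d e. (fps_X::rat fps) ^ wstat r) = (\<Sum>r\<in>W (d + d). if nX r = d \<and> es r = e then fps_X ^ wstat r else 0)"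
  unfolding RR_def by (rule sum.inter_filter) (rule W_finite)

lemma point_plus:
  assumes d1: "1 \<le> d" and r: "r \<in> W (d + d)"
  shows "(if nX r = d \<and> es r = (m, True) then (fps_X::rat fps) ^ wstat r else 0)
    = (if PS d True m False r then fps_X ^ wstat r else 0) - (if PS d True (Suc m) False r then fps_X ^ wstat r else 0)"
proof (cases "nX r = d")
  case False then show ?thesis by (simp add: PS_def)
next
  case True
  have ne: "r \<noteq> []" using r d1 by (auto simp: W_def)
  have bal: "nX r = nY r" using len_nY[OF r True] True by simp
  have sh: "snd (es r) = (\<not> hd r)" using es_bal_hd[OF ne bal] .
  obtain B s where Bs: "es r = (B, s)" by fastforce
  show ?thesis using True ne sh Bs by (auto simp: PS_def)
qed

lemma point_minus:
  assumes d1: "1 \<le> d" and r: "r \<in> W (d + d)"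
  shows "(if nX r = d \<and> es r = (m, False) then (fps_X::rat fps) ^ wstat r else 0)
    = (if PS d False m True r then fps_X ^ wstat r else 0) - (if PS d False (Suc m) True r then fps_X ^ wstat r else 0)"
proof (cases "nX r = d")
  case False then show ?thesis by (simp add: PS_def)
next
  case True
  have ne: "r \<noteq> []" using r d1 by (auto simp: W_def)
  have bal: "nX r = nY r" using len_nY[OF r True] True by simp
  have sh: "snd (es r) = (\<not> hd r)" using es_bal_hd[OF ne bal] .
  obtain B s where Bs: "es r = (B, s)" by fastforce
  show ?thesis using True ne sh Bs by (auto simp: PS_def)
qed

definition WQ :: "nat \<Rightarrow> nat \<Rightarrow> rat fps" where
  "WQ d m = qb (d + d - 1) (d + m - 1) - fps_X ^ m * qb (d + d - 1) (d + m)"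

lemma qb_fix1: "1 \<le> m \<Longrightarrow> m \<le> d \<Longrightarrow> qb (d + d - 1) (d - m) = qb (d + d - 1) (d + m - 1)"
proof -
  assume a: "1 \<le> m" "m \<le> d"
  have "qb (d + d - 1) (d - m) = qb (d + d - 1) (d + d - 1 - (d - m))" by (rule qb_sym) (use a in simp)
  also have "d + d - 1 - (d - m) = d + m - 1" using a by simp
  finally show ?thesis .
qed

lemma qb_fix2: "1 \<le> m \<Longrightarrow> m \<le> d \<Longrightarrow>
  (if Suc m \<le> d then fps_X ^ m * qb (d + d - 1) (d - Suc m) else 0) = fps_X ^ m * qb (d + d - 1) (d + m)"
proof -
  assume a: "1 \<le> m" "m \<le> d"
  show ?thesis
  proof (cases "Suc m \<le> d")
    case True
    have "qb (d + d - 1) (d - Suc m) = qb (d + d - 1) (d + d - 1 - (d - Suc m))" by (rule qb_sym) (use a in simp)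
    also have "d + d - 1 - (d - Suc m) = d + m" using a True by simp
    finally show ?thesis using True by simp
  next
    case False
    then have "d + d - 1 < d + m" using a by simp
    then show ?thesis using False by (simp add: qb_gt)
  qed
qed

lemma wsum_plus:
  assumes m1: "1 \<le> m" and md: "m \<le> d"
  shows "(\<Sum>r\<in>RR d (m, True). (fps_X::rat fps) ^ wstat r) = fps_X ^ (d * d + tri m) * WQ d m"
proof -
  have d1: "1 \<le> d" using m1 md by simp
  have "(\<Sum>r\<in>RR d (m, True). (fps_X::rat fps) ^ wstat r)
     = (\<Sum>r\<in>W (d + d). (if PS d True m False r then fps_X ^ wstat r else 0) - (if PS d True (Suc m) False r then fps_X ^ wstat r else 0))"
    unfolding sumRR_W by (rule sum.cong[OF refl]) (rule point_plus[OF d1])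
  also have "\<dots> = S d d True m False - S d d True (Suc m) False"
    by (simp add: S_def sum_subtractf)
  also have "\<dots> = CTY d d m - CTY d d (Suc m)"
    using S_closed[of d d "d + d" m True False] S_closed[of d d "d + d" "Suc m" True False] m1
    by (simp add: Cf_def)
  also have "\<dots> = fps_X ^ (d * d + tri m) * WQ d m"
  proof -
    have c1: "CTY d d m = fps_X ^ (d * d + tri m) * qb (d + d - 1) (d + m - 1)"
      using m1 md qb_fix1[OF m1 md] tri_eq[of d] by (simp add: CTY_def)
    have c2: "CTY d d (Suc m) = fps_X ^ (d * d + tri m) * (if Suc m \<le> d then fps_X ^ m * qb (d + d - 1) (d - Suc m) else 0)"
      using tri_eq[of d] by (simp add: CTY_def power_add mult.assoc add.assoc)
    show ?thesis unfolding c1 c2 qb_fix2[OF m1 md] WQ_def by (simp add: algebra_simps)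
  qed
  finally show ?thesis .
qed

lemma wsum_minus:
  assumes m1: "1 \<le> m" and md: "m \<le> d"
  shows "(\<Sum>r\<in>RR d (m, False). (fps_X::rat fps) ^ wstat r) = fps_X ^ (tri d + tri d + tri m) * WQ d m"
proof -
  have d1: "1 \<le> d" using m1 md by simp
  have "(\<Sum>r\<in>RR d (m, False). (fps_X::rat fps) ^ wstat r)
     = (\<Sum>r\<in>W (d + d). (if PS d False m True r then fps_X ^ wstat r else 0) - (if PS d False (Suc m) True r then fps_X ^ wstat r else 0))"
    unfolding sumRR_W by (rule sum.cong[OF refl]) (rule point_minus[OF d1])
  also have "\<dots> = S d d False m True - S d d False (Suc m) True"
    by (simp add: S_def sum_subtractf)
  also have "\<dots> = CFX d d m - CFX d d (Suc m)"
    using S_closed[of d d "d + d" m False True] S_closed[of d d "d + d" "Suc m" False True] m1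
    by (simp add: Cf_def)
  also have "\<dots> = fps_X ^ (tri d + tri d + tri m) * WQ d m"
  proof -
    have c1: "CFX d d m = fps_X ^ (tri d + tri d + tri m) * qb (d + d - 1) (d + m - 1)"
      using m1 md qb_fix1[OF m1 md] by (simp add: CFX_def)
    have c2: "CFX d d (Suc m) = fps_X ^ (tri d + tri d + tri m) * (if Suc m \<le> d then fps_X ^ m * qb (d + d - 1) (d - Suc m) else 0)"
      by (simp add: CFX_def power_add mult.assoc add.assoc)
    show ?thesis unfolding c1 c2 qb_fix2[OF m1 md] WQ_def by (simp add: algebra_simps)
  qed
  finally show ?thesis .
qed


lemma div_unit: "fps_nth (g::rat fps) 0 \<noteq> 0 \<Longrightarrow> f / g = f * inverse g"
  by (rule fps_divide_unit)

lemma ratio_part: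
  assumes m1: "1 \<le> m" and md: "m \<le> d"
  shows "((1 - fps_X ^ m) / (1 - fps_X ^ d)) * (qbinom (2*d) (d+m) :: rat fps) = WQ d m"
proof -
  have d1: "1 \<le> d" using m1 md by simp
  have n0: "fps_nth (1 - fps_X ^ d :: rat fps) 0 \<noteq> 0" using d1 by simp
  have inv: "inverse (1 - fps_X ^ d :: rat fps) * (1 - fps_X ^ d) = 1"
    by (rule inverse_mult_eq_1) (use n0 in simp)
  have qq: "qbinom (2*d) (d+m) = qb (2*d) (d+m)" using md by (intro qbinom_qb) simp
  have "((1 - fps_X ^ m) / (1 - fps_X ^ d)) * (qbinom (2*d) (d+m) :: rat fps)
      = ((1 - fps_X ^ m) * inverse (1 - fps_X ^ d)) * qb (2*d) (d+m)"
    unfolding qq div_unit[OF n0] ..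
  also have "\<dots> = inverse (1 - fps_X ^ d) * ((1 - fps_X ^ m) * qb (2*d) (d+m))"
    by (simp only: mult_ac)
  also have "\<dots> = inverse (1 - fps_X ^ d) * ((1 - fps_X ^ d) * WQ d m)"
    using key_identity[OF m1 md] by (simp add: WQ_def)
  also have "\<dots> = WQ d m" using inv by (simp add: mult.assoc[symmetric])
  finally show ?thesis .
qed

theorem theorem1p1:
  fixes d m :: nat
  assumes "1 \<le> m" and "m \<le> d"
  shows "Abs_fps (\<lambda>n. if n = 0 then 0 else of_nat (a_plus m n d)) =
           (fps_X ^ (d^2 + d + (m choose 2)) / qpoch fps_X (2*d)) *
           ((1 - fps_X ^ m) / (1 - fps_X ^ d)) * (qbinom (2*d) (d+m) :: rat fps) \<and>
         Abs_fps (\<lambda>n. if n = 0 then 0 else of_nat (a_minus m n d)) =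
           (fps_X ^ (d^2 + (m choose 2)) / qpoch fps_X (2*d)) *
           ((1 - fps_X ^ m) / (1 - fps_X ^ d)) * (qbinom (2*d) (d+m) :: rat fps)"
proof -
  have m1: "1 \<le> m" and md: "m \<le> d" using assms by auto
  have d1: "1 \<le> d" using m1 md by simp
  have pn: "fps_nth (qpoch fps_X (2*d) :: rat fps) 0 \<noteq> 0" by (simp add: qpoch_nth0)
  let ?P = "inverse (qpoch fps_X (2*d) :: rat fps)"
  have R: "((1 - fps_X ^ m) / (1 - fps_X ^ d)) * (qbinom (2*d) (d+m) :: rat fps) = WQ d m"
    by (rule ratio_part[OF m1 md])
  have plus: "Abs_fps (\<lambda>n. if n = 0 then 0 else of_nat (a_plus m n d)) =
           (fps_X ^ (d^2 + d + (m choose 2)) / qpoch fps_X (2*d)) *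
           ((1 - fps_X ^ m) / (1 - fps_X ^ d)) * (qbinom (2*d) (d+m) :: rat fps)"
  proof -
    have "Abs_fps (\<lambda>n. if n = 0 then 0 else of_nat (a_plus m n d) :: rat)
        = Abs_fps (\<lambda>n. if n = 0 then 0 else of_nat (card {p \<in> BB n d. es (mrg (fst p) (snd p)) = (m, True)}))"
      by (simp only: a_plus_E[OF d1])
    also have "\<dots> = fps_X ^ d * (\<Sum>r\<in>RR d (m, True). gfr r)" by (rule fps_E[OF d1])
    also have "\<dots> = fps_X ^ d * ((fps_X ^ (d * d + tri m) * WQ d m) * ?P)"
      unfolding sumRR wsum_plus[OF m1 md] ..
    also have "\<dots> = fps_X ^ (d^2 + d + (m choose 2)) * ?P * WQ d m"
      by (simp add: power_add[symmetric] tri_choose power2_eq_square mult_ac add_ac)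
    also have "\<dots> = (fps_X ^ (d^2 + d + (m choose 2)) / qpoch fps_X (2*d)) *
           ((1 - fps_X ^ m) / (1 - fps_X ^ d)) * (qbinom (2*d) (d+m) :: rat fps)"
      unfolding mult.assoc[of "_ / _"] R using pn by (simp add: div_unit)
    finally show ?thesis .
  qed
  have minus: "Abs_fps (\<lambda>n. if n = 0 then 0 else of_nat (a_minus m n d)) =
           (fps_X ^ (d^2 + (m choose 2)) / qpoch fps_X (2*d)) *
           ((1 - fps_X ^ m) / (1 - fps_X ^ d)) * (qbinom (2*d) (d+m) :: rat fps)"
  proof -
    have "Abs_fps (\<lambda>n. if n = 0 then 0 else of_nat (a_minus m n d) :: rat)
        = Abs_fps (\<lambda>n. if n = 0 then 0 else of_nat (card {p \<in> BB n d. es (mrg (fst p) (snd p)) = (m, False)}))"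
      by (simp only: a_minus_E[OF d1])
    also have "\<dots> = fps_X ^ d * (\<Sum>r\<in>RR d (m, False). gfr r)" by (rule fps_E[OF d1])
    also have "\<dots> = fps_X ^ d * ((fps_X ^ (tri d + tri d + tri m) * WQ d m) * ?P)"
      unfolding sumRR wsum_minus[OF m1 md] ..
    also have "\<dots> = fps_X ^ (d^2 + (m choose 2)) * ?P * WQ d m"
    proof -
      have "d + (tri d + tri d + tri m) = d^2 + (m choose 2)"
        using tri_eq[of d] tri_choose[of m] by (simp add: power2_eq_square)
      then show ?thesis by (simp add: power_add[symmetric] mult_ac)
    qed
    also have "\<dots> = (fps_X ^ (d^2 + (m choose 2)) / qpoch fps_X (2*d)) *
           ((1 - fps_X ^ m) / (1 - fps_X ^ d)) * (qbinom (2*d) (d+m) :: rat fps)"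
      unfolding mult.assoc[of "_ / _"] R using pn by (simp add: div_unit)
    finally show ?thesis .
  qed
  show ?thesis using plus minus by simp
qed

end
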